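(* Let $G$ be a group, $\mathcal{A}$ a unital $C^\ast$-algebra, $\tau$ an action of $G$ on $\mathcal{A}$ by unital $C^\ast$-automorphisms, $\mathcal{H}$ a Hilbert space and $\phi\in\mathrm{UCP}^{G_\tau}(\mathcal{A},\mathcal{B}(\mathcal{H}))$. The following are equivalent: (1) $\phi$ is a $C^\ast$-extreme point of $\mathrm{UCP}^{G_\tau}(\mathcal{A},\mathcal{B}(\mathcal{H}))$; (2) for every $\psi\in\mathrm{CP}^{G_\tau}(\mathcal{A},\mathcal{B}(\mathcal{H}))$ with $\psi\le\phi$ and $\psi(1_\mathcal{A})$ invertible, there exists an invertible $Z\in\mathcal{B}(\mathcal{H})$ such that $\psi(a)=Z^\ast\phi(a)Z$ for all $a\in\mathcal{A}$.
   Context: $\mathrm{CP}^{G_\tau}(\mathcal{A},\mathcal{B}(\mathcal{H}))$ is the set of completely positive maps $\psi:\mathcal{A}\to\mathcal{B}(\mathcal{H})$ with $\psi(\tau_g(a))=\psi(a)$ for all $g\in G,a\in\mathcal{A}$; $\mathrm{UCP}^{G_\tau}(\mathcal{A},\mathcal{B}(\mathcal{H}))$ is its subset of unital maps. $\psi\le\phi$ means $\phi-\psi$ is completely positive. A $C^\ast$-convex combination is $\sum_iT_i^\ast\phi_i(\cdot)T_i$ with $T_i\in\mathcal{B}(\mathcal{H})$, $\sum_iT_i^\ast T_i=\mathrm{Id}_\mathcal{H}$; proper if all $T_i$ invertible. $\phi$ is a $C^\ast$-extreme point of $\mathrm{UCP}^{G_\tau}(\mathcal{A},\mathcal{B}(\mathcal{H}))$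 if whenever $\phi$ is a proper $C^\ast$-convex combination of elements $\phi_i$ of this set, there exist unitaries $U_i$ on $\mathcal{H}$ with $\phi_i=U_i^\ast\phi(\cdot)U_i$ for all $i$. *)

theory Defs
  imports Complex_Main "HOL-Algebra.Group"
begin

class complex_vec = real_vector +
  fixes cscale :: "complex \<Rightarrow> 'a \<Rightarrow> 'a"
  assumes cscale_add_right: "cscale a (x + y) = cscale a x + cscale a y"
    and cscale_add_left: "cscale (a + b) x = cscale a x + cscale b x"
    and cscale_cscale: "cscale a (cscale b x) = cscale (a * b) x"
    and cscale_one: "cscale 1 x = x"
    and scaleR_cscale: "scaleR r x = cscale (complex_of_real r) x"

class complex_normed_vec = complex_vec + real_normed_vector +
  assumes norm_cscale: "norm (cscale a x) = cmod a * norm x"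

class complex_hilbert = complex_normed_vec + banach +
  fixes cinner :: "'a \<Rightarrow> 'a \<Rightarrow> complex"
  assumes cinner_add_right: "cinner x (y + z) = cinner x y + cinner x z"
    and cinner_cscale_right: "cinner x (cscale a y) = a * cinner x y"
    and cinner_cnj: "cinner y x = cnj (cinner x y)"
    and norm_cinner: "norm x = sqrt (Re (cinner x x))"

class cstar_algebra = complex_normed_vec + real_normed_algebra_1 + banach +
  fixes cstar :: "'a \<Rightarrow> 'a"
  assumes cstar_cstar: "cstar (cstar x) = x"
    and cstar_add: "cstar (x + y) = cstar x + cstar y"
    and cstar_cscale: "cstar (cscale a x) = cscale (cnj a) (cstar x)"
    and cstar_mult: "cstar (x * y) = cstar y * cstar x"
    and cscale_mult_left: "cscale a x * y = cscale a (x * y)"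
    and cscale_mult_right: "x * cscale a y = cscale a (x * y)"
    and cstar_identity: "norm (cstar x * x) = (norm x)\<^sup>2"

definition clinear :: "('a::complex_vec \<Rightarrow> 'b::complex_vec) \<Rightarrow> bool" where
  "clinear f \<longleftrightarrow> (\<forall>x y. f (x + y) = f x + f y) \<and> (\<forall>c x. f (cscale c x) = cscale c (f x))"

definition bounded_op :: "('h::complex_hilbert \<Rightarrow> 'h) \<Rightarrow> bool" where
  "bounded_op T \<longleftrightarrow> clinear T \<and> (\<exists>K. \<forall>x. norm (T x) \<le> K * norm x)"

definition adj :: "('h::complex_hilbert \<Rightarrow> 'h) \<Rightarrow> ('h \<Rightarrow> 'h)" where
  "adj T = (SOME S. \<forall>x y. cinner (S x) y = cinner x (T y))"

definition invertible_op :: "('h::complex_hilbert \<Rightarrow> 'h) \<Rightarrow> bool" where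
  "invertible_op T \<longleftrightarrow> bounded_op T \<and> (\<exists>W. bounded_op W \<and> W \<circ> T = id \<and> T \<circ> W = id)"

definition unitary_op :: "('h::complex_hilbert \<Rightarrow> 'h) \<Rightarrow> bool" where
  "unitary_op U \<longleftrightarrow> bounded_op U \<and> adj U \<circ> U = id \<and> U \<circ> adj U = id"

text \<open>A map psi : A \<rightarrow> B(H) is completely positive if it is linear and for all n,
  psi_n maps positive elements of M_n(A) (i.e. those of the form X* X) to positive
  operators on H^n: for X in M_n(A) and xi in H^n,
  sum_{i,j} <xi_i, psi((X*X)_{ij}) xi_j> \<ge> 0, where (X*X)_{ij} = sum_k (X_{ki})* X_{kj}.\<close>
definition cp_map :: "('a::cstar_algebra \<Rightarrow> 'h::complex_hilbert \<Rightarrow> 'h) \<Rightarrow> bool" where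
  "cp_map \<psi> \<longleftrightarrow>
     (\<forall>x y. \<psi> (x + y) = (\<lambda>h. \<psi> x h + \<psi> y h)) \<and>
     (\<forall>c x. \<psi> (cscale c x) = (\<lambda>h. cscale c (\<psi> x h))) \<and>
     (\<forall>a. bounded_op (\<psi> a)) \<and>
     (\<forall>(n::nat) (X::nat \<Rightarrow> nat \<Rightarrow> 'a) (\<xi>::nat \<Rightarrow> 'h).
        let s = (\<Sum>i<n. \<Sum>j<n. cinner (\<xi> i) (\<psi> (\<Sum>k<n. cstar (X k i) * X k j) (\<xi> j)))
        in Im s = 0 \<and> 0 \<le> Re s)"

definition cp_le :: "('a::cstar_algebra \<Rightarrow> 'h::complex_hilbert \<Rightarrow> 'h) \<Rightarrow> ('a \<Rightarrow> 'h \<Rightarrow> 'h) \<Rightarrow> bool" where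
  "cp_le \<psi> \<phi> \<longleftrightarrow> cp_map (\<lambda>a h. \<phi> a h - \<psi> a h)"

definition unital_star_aut :: "('a::cstar_algebra \<Rightarrow> 'a) \<Rightarrow> bool" where
  "unital_star_aut f \<longleftrightarrow> bij f \<and> clinear f \<and> (\<forall>x y. f (x * y) = f x * f y)
     \<and> (\<forall>x. f (cstar x) = cstar (f x)) \<and> f 1 = 1"

definition cstar_action :: "('g, 'b) monoid_scheme \<Rightarrow> ('g \<Rightarrow> 'a::cstar_algebra \<Rightarrow> 'a) \<Rightarrow> bool" where
  "cstar_action G \<tau> \<longleftrightarrow> (\<forall>g\<in>carrier G. unital_star_aut (\<tau> g))
     \<and> (\<forall>g\<in>carrier G. \<forall>h\<in>carrier G. \<tau> (g \<otimes>\<^bsub>G\<^esub> h) = \<tau> g \<circ> \<tau> h)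
     \<and> \<tau> \<one>\<^bsub>G\<^esub> = id"

definition CP_inv :: "('g, 'b) monoid_scheme \<Rightarrow> ('g \<Rightarrow> 'a::cstar_algebra \<Rightarrow> 'a)
    \<Rightarrow> ('a \<Rightarrow> 'h::complex_hilbert \<Rightarrow> 'h) set" where
  "CP_inv G \<tau> = {\<psi>. cp_map \<psi> \<and> (\<forall>g\<in>carrier G. \<forall>a. \<psi> (\<tau> g a) = \<psi> a)}"

definition UCP_inv :: "('g, 'b) monoid_scheme \<Rightarrow> ('g \<Rightarrow> 'a::cstar_algebra \<Rightarrow> 'a)
    \<Rightarrow> ('a \<Rightarrow> 'h::complex_hilbert \<Rightarrow> 'h) set" where
  "UCP_inv G \<tau> = {\<psi>. \<psi> \<in> CP_inv G \<tau> \<and> \<psi> 1 = id}"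

definition C_extreme :: "('g, 'b) monoid_scheme \<Rightarrow> ('g \<Rightarrow> 'a::cstar_algebra \<Rightarrow> 'a)
    \<Rightarrow> ('a \<Rightarrow> 'h::complex_hilbert \<Rightarrow> 'h) \<Rightarrow> bool" where
  "C_extreme G \<tau> \<phi> \<longleftrightarrow> \<phi> \<in> UCP_inv G \<tau> \<and>
     (\<forall>(n::nat) (T::nat \<Rightarrow> 'h \<Rightarrow> 'h) (\<Phi>::nat \<Rightarrow> 'a \<Rightarrow> 'h \<Rightarrow> 'h).
        (\<forall>i<n. \<Phi> i \<in> UCP_inv G \<tau> \<and> invertible_op (T i))
        \<and> (\<forall>h. (\<Sum>i<n. adj (T i) (T i h)) = h)
        \<and> (\<forall>a. \<phi> a = (\<lambda>h. \<Sum>i<n. adj (T i) (\<Phi> i a (T i h))))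
        \<longrightarrow> (\<exists>U::nat \<Rightarrow> 'h \<Rightarrow> 'h. \<forall>i<n. unitary_op (U i) \<and>
               (\<forall>a. \<Phi> i a = adj (U i) \<circ> \<phi> a \<circ> U i)))"

end

theory Submission
  imports Defs
begin


lemma cinner_add_left: "cinner (x + y) z = cinner x z + cinner y z"
  by (metis cinner_cnj cinner_add_right complex_cnj_add)

lemma cinner_cscale_left: "cinner (cscale a x) y = cnj a * cinner x y"
  by (metis cinner_cnj cinner_cscale_right complex_cnj_mult complex_cnj_cnj)

lemma cinner_zero_right[simp]: "cinner x 0 = 0"
  by (metis add_cancel_right_right add_0 cinner_add_right)

lemma cinner_zero_left[simp]: "cinner 0 x = 0"
  by (metis cinner_cnj cinner_zero_right complex_cnj_zero)

lemma cinner_diff_right: "cinner x (y - z) = cinner x y - cinner x z"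
  by (metis cinner_add_right diff_add_cancel eq_diff_eq)

lemma cinner_diff_left: "cinner (y - z) x = cinner y x - cinner z x"
  by (metis cinner_add_left diff_add_cancel eq_diff_eq)

lemma cinner_minus_right: "cinner x (- y) = - cinner x y"
  by (metis cinner_diff_right cinner_zero_right diff_0)

lemma cinner_scaleR_right: "cinner x (scaleR r y) = complex_of_real r * cinner x y"
  by (simp add: scaleR_cscale cinner_cscale_right)

lemma cinner_scaleR_left: "cinner (scaleR r x) y = complex_of_real r * cinner x y"
  by (simp add: scaleR_cscale cinner_cscale_left)

lemma cinner_self_Im: "Im (cinner x x) = 0"
  by (metis cinner_cnj cnj.sel(2) neg_equal_zero)

lemma cinner_self_Re_nonneg: "0 \<le> Re (cinner x x)"
proof (rule ccontr)
  assume "\<not> ?thesis"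
  then have "sqrt (Re (cinner x x)) < 0" by simp
  then show False using norm_cinner[of x] norm_ge_zero[of x] by linarith
qed

lemma norm_sq_cinner: "(norm x)^2 = Re (cinner x x)"
  using norm_cinner[of x] cinner_self_Re_nonneg[of x] by simp

lemma cinner_self_eq: "cinner x x = complex_of_real ((norm x)^2)"
  by (simp add: complex_eq_iff norm_sq_cinner cinner_self_Im)

lemma cinner_self_zero: "cinner x x = 0 \<Longrightarrow> x = 0"
  by (metis cinner_self_eq norm_eq_zero of_real_eq_0_iff zero_eq_power2)

lemma cinner_ext: "(\<And>y. cinner x y = cinner x' y) \<Longrightarrow> x = x'"
  by (metis cinner_diff_left cinner_self_zero eq_iff_diff_eq_0)

lemma cscale_zero_right[simp]: "cscale c 0 = (0::'a::complex_vec)"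
  by (metis add_cancel_right_right add_0 cscale_add_right)

lemma cscale_diff_right: "cscale c (x - y) = cscale c x - cscale (c::complex) (y::'a::complex_vec)"
  by (metis cscale_add_right diff_add_cancel eq_diff_eq)

lemma scaleR_cscale_comm: "scaleR r (cscale c x) = cscale c (scaleR r (x::'a::complex_vec))"
  by (simp add: scaleR_cscale cscale_cscale mult.commute)



lemma clinearD: assumes "clinear f" shows "f (x + y) = f x + f y" "f (cscale c x) = cscale c (f x)"
  using assms unfolding clinear_def by auto

lemma clinear_linear: assumes "clinear f" shows "linear f"
proof (rule linearI)
  show "f (x + y) = f x + f y" for x y using assms by (simp add: clinearD)
  show "f (r *\<^sub>R x) = r *\<^sub>R f x" for r x using assms by (simp add: clinearD scaleR_cscale)
qed

lemma clinear_diff: "clinear f \<Longrightarrow> f (x - y) = f x - f y"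
  by (simp add: clinear_linear linear_diff)
lemma clinear_0: "clinear f \<Longrightarrow> f 0 = 0"
  by (simp add: clinear_linear linear_0)
lemma clinear_scaleR: "clinear f \<Longrightarrow> f (r *\<^sub>R x) = r *\<^sub>R f x"
  by (simp add: clinear_linear linear_scale)
lemma clinear_minus: "clinear f \<Longrightarrow> f (- x) = - f x"
  by (simp add: clinear_linear linear_neg)
lemma clinear_sum: "clinear f \<Longrightarrow> f (sum g S) = (\<Sum>i\<in>S. f (g i))"
  by (simp add: clinear_linear linear_sum)

lemma clinear_id: "clinear id" "clinear (\<lambda>x. x)"
  by (auto simp: clinear_def)

lemma clinear_comp: "clinear f \<Longrightarrow> clinear g \<Longrightarrow> clinear (\<lambda>x. f (g x))"
  by (simp add: clinear_def)

lemma bounded_opD: assumes "bounded_op T" shows "clinear T" "\<exists>K>0. \<forall>x. norm (T x) \<le> K * norm x"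
proof -
  show "clinear T" using assms bounded_op_def by blast
  obtain K where K: "\<forall>x. norm (T x) \<le> K * norm x" using assms bounded_op_def by blast
  have "\<forall>x. norm (T x) \<le> max K 1 * norm x"
  proof
    fix x
    have "norm (T x) \<le> K * norm x" using K by blast
    moreover have "K * norm x \<le> max K 1 * norm x" by (simp add: mult_right_mono)
    ultimately show "norm (T x) \<le> max K 1 * norm x" by (meson order_trans)
  qed
  moreover have "max K 1 > 0" by simp
  ultimately show "\<exists>K>0. \<forall>x. norm (T x) \<le> K * norm x" by blast
qed

lemma bounded_opI: "clinear T \<Longrightarrow> (\<And>x. norm (T x) \<le> K * norm x) \<Longrightarrow> bounded_op T"
  unfolding bounded_op_def by blast

lemma bounded_op_bounded_linear: assumes "bounded_op T" shows "bounded_linear T"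
proof -
  obtain K where K: "\<forall>x. norm (T x) \<le> K * norm x" using assms bounded_op_def by blast
  have "linear T" using assms bounded_opD clinear_linear by blast
  show ?thesis
  proof (rule bounded_linear_intro[where K=K])
    show "T (x + y) = T x + T y" for x y using \<open>linear T\<close> linear_add by blast
    show "T (r *\<^sub>R x) = r *\<^sub>R T x" for r x using \<open>linear T\<close> linear_scale by blast
    show "norm (T x) \<le> norm x * K" for x using K by (simp add: mult.commute)
  qed
qed

lemma bounded_op_comp: assumes "bounded_op S" "bounded_op T" shows "bounded_op (\<lambda>x. S (T x))"
proof -
  obtain K where K: "K>0" "\<forall>x. norm (S x) \<le> K * norm x" using assms bounded_opD by blast
  obtain L where L: "L>0" "\<forall>x. norm (T x) \<le> L * norm x" using assms bounded_opD by blast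
  have bd: "norm (S (T x)) \<le> (K*L) * norm x" for x
  proof -
    have "norm (S (T x)) \<le> K * norm (T x)" using K by blast
    also have "\<dots> \<le> K * (L * norm x)" using K L mult_left_mono by auto
    finally show ?thesis by (simp add: mult.assoc)
  qed
  have cl: "clinear (\<lambda>x. S (T x))" using assms bounded_opD(1) clinear_comp by blast
  show ?thesis by (rule bounded_opI[OF cl bd])
qed

lemma bounded_op_comp': "bounded_op S \<Longrightarrow> bounded_op T \<Longrightarrow> bounded_op (S \<circ> T)"
  using bounded_op_comp[of S T] by (simp add: o_def)

lemma bounded_op_id: "bounded_op id" "bounded_op (\<lambda>x. x)"
  by (auto intro!: bounded_opI[where K=1] clinear_id)

lemma quad_lemma:
  fixes a N :: real and b :: complex
  assumes "\<And>c. 0 \<le> a - 2 * Re (c * b) + (cmod c)^2 * N"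
  shows "(cmod b)^2 \<le> a * N"
proof -
  have h: "0 \<le> a - 2 * t * (cmod b)^2 + t^2 * (cmod b)^2 * N" for t :: real
  proof -
    have "Re (complex_of_real t * cnj b * b) = t * (cmod b)^2"
      using cmod_power2[of b] by (simp add: power2_eq_square algebra_simps)
    moreover have "(cmod (complex_of_real t * cnj b))^2 = t^2 * (cmod b)^2"
      by (simp add: norm_mult power_mult_distrib)
    ultimately show ?thesis using assms[of "complex_of_real t * cnj b"] by (simp add: algebra_simps)
  qed
  show ?thesis
  proof (cases "b = 0")
    case True
    have a0: "0 \<le> a" using h[of 0] by simp
    moreover have "0 \<le> N"
    proof -
      have "0 \<le> a - 2 * Re (complex_of_real t * b) + (cmod (complex_of_real t))^2 * N" for t
        using assms by blast
      then have "0 \<le> a + t^2 * N" for t using True by simp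
      from this[of "sqrt (a+1) / sqrt (-N)"] show ?thesis
        using a0 by (cases "N < 0") (auto simp: power_divide)
    qed
    ultimately show ?thesis using True by simp
  next
    case False
    then have bpos: "(cmod b)^2 > 0" by simp
    show ?thesis
    proof (cases "N > 0")
      case True
      have "0 \<le> a - 2 * (1/N) * (cmod b)^2 + (1/N)^2 * (cmod b)^2 * N" using h by blast
      also have "\<dots> = a - (cmod b)^2 / N" using True by (simp add: power2_eq_square field_simps)
      finally show ?thesis using True by (simp add: field_simps)
    next
      case False
      have "0 \<le> a - 2 * ((a+1)/(cmod b)^2) * (cmod b)^2 + ((a+1)/(cmod b)^2)^2 * (cmod b)^2 * N"
        using h by blast
      moreover have "((a+1)/(cmod b)^2)^2 * (cmod b)^2 * N \<le> 0"
        using False by (simp add: mult_nonneg_nonpos)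
      ultimately have "0 \<le> a - 2 * (a+1)" using bpos by simp
      then have "a < 0" by simp
      have "0 \<le> a - 2 * 0 * (cmod b)^2 + 0^2 * (cmod b)^2 * N" using h by blast
      then show ?thesis using \<open>a < 0\<close> by simp
    qed
  qed
qed

lemma expand_form:
  assumes "clinear A"
  shows "cinner (x + cscale c y) (A (x + cscale c y)) =
    cinner x (A x) + c * cinner x (A y) + cnj c * cinner y (A x) + cnj c * c * cinner y (A y)"
  using assms by (simp add: clinearD cinner_add_left cinner_add_right cinner_cscale_left cinner_cscale_right algebra_simps)

lemma hermitian:
  assumes "clinear A" "\<And>x. Im (cinner x (A x)) = 0"
  shows "cinner y (A x) = cnj (cinner x (A y))"
proof -
  have 1: "Im (cinner x (A y)) + Im (cinner y (A x)) = 0"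
    using assms(2)[of "x + cscale 1 y"] expand_form[OF assms(1), of x 1 y] assms(2)[of x] assms(2)[of y]
    by simp
  have 2: "Re (cinner x (A y)) - Re (cinner y (A x)) = 0"
    using assms(2)[of "x + cscale \<i> y"] expand_form[OF assms(1), of x \<i> y] assms(2)[of x] assms(2)[of y]
    by simp
  show ?thesis using 1 2 by (simp add: complex_eq_iff)
qed

lemma pos_cs:
  assumes "clinear A" "\<And>x. Im (cinner x (A x)) = 0" "\<And>x. 0 \<le> Re (cinner x (A x))"
  shows "(cmod (cinner x (A y)))^2 \<le> Re (cinner x (A x)) * Re (cinner y (A y))"
proof (rule quad_lemma)
  fix c
  have e: "cinner (x + cscale (-c) y) (A (x + cscale (-c) y)) =
    cinner x (A x) - c * cinner x (A y) - cnj c * cnj (cinner x (A y)) + cnj c * c * cinner y (A y)"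
    using expand_form[OF assms(1), of x "-c" y] hermitian[OF assms(1,2), of x y] by simp
  have "Re (cnj c * c * cinner y (A y)) = (cmod c)^2 * Re (cinner y (A y))"
    using assms(2)[of y] cmod_power2[of c] by (simp add: power2_eq_square algebra_simps)
  moreover have "Re (c * cinner x (A y) + cnj c * cnj (cinner x (A y))) = 2 * Re (c * cinner x (A y))"
    by simp
  ultimately show "0 \<le> Re (cinner x (A x)) - 2 * Re (c * cinner x (A y)) + (cmod c)\<^sup>2 * Re (cinner y (A y))"
    using assms(3)[of "x + cscale (-c) y"] e by (simp add: algebra_simps)
qed

lemma cauchy_schwarz: "cmod (cinner x y) \<le> norm x * norm y"
proof -
  have "(cmod (cinner x y))^2 \<le> Re (cinner x x) * Re (cinner y y)"
    using pos_cs[of id x y] by (simp add: clinear_id cinner_self_Im cinner_self_Re_nonneg)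
  also have "\<dots> = (norm x * norm y)^2" by (simp add: norm_sq_cinner power_mult_distrib)
  finally show ?thesis by (meson mult_nonneg_nonneg norm_ge_zero power2_le_imp_le)
qed



lemma parallelogram:
  fixes a b :: "'h::complex_hilbert"
  shows "(norm (a - b))^2 = 2 * (norm a)^2 + 2 * (norm b)^2 - (norm (a + b))^2"
  by (simp add: norm_sq_cinner cinner_add_left cinner_add_right cinner_diff_left cinner_diff_right)

lemma closest_point:
  fixes z :: "'h::complex_hilbert"
  assumes ne: "m0 \<in> M" and mid: "\<And>a b. a\<in>M \<Longrightarrow> b\<in>M \<Longrightarrow> (1/2) *\<^sub>R (a + b) \<in> M"
   and closed: "\<And>s l. (\<forall>n. s n \<in> M) \<Longrightarrow> s \<longlonglongrightarrow> l \<Longrightarrow> l \<in> M"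
  shows "\<exists>m\<in>M. \<forall>m'\<in>M. norm (z - m) \<le> norm (z - m')"
proof -
  define D where "D = (\<lambda>m. norm (z - m)) ` M"
  define d where "d = Inf D"
  have Dne: "D \<noteq> {}" using ne D_def by blast
  have bdd: "bdd_below D" unfolding D_def by (rule bdd_belowI[of _ 0]) auto
  have dle: "d \<le> norm (z - m')" if "m' \<in> M" for m'
    unfolding d_def using that bdd by (intro cInf_lower) (auto simp: D_def)
  have d0: "0 \<le> d" unfolding d_def using Dne by (intro cInf_greatest) (auto simp: D_def)
  have "\<forall>n. \<exists>m\<in>M. norm (z - m) < d + inverse (real (Suc n))"
  proof
    fix n
    have "Inf D < d + inverse (real (Suc n))" using d_def by simp
    from cInf_lessD[OF Dne this] show "\<exists>m\<in>M. norm (z - m) < d + inverse (real (Suc n))"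
      by (auto simp: D_def)
  qed
  then obtain s where s: "\<And>n. s n \<in> M" "\<And>n. norm (z - s n) < d + inverse (real (Suc n))"
    by metis
  have sq: "(norm (z - s n))^2 \<le> d^2 + (2*d+1) * inverse (real (Suc n))" for n
  proof -
    define e where "e = inverse (real (Suc n))"
    have e0: "0 < e" "e \<le> 1" unfolding e_def by (auto simp: field_simps)
    have "(norm (z - s n))^2 \<le> (d + e)^2"
      using s(2)[of n] e_def by (intro power_mono) auto
    also have "\<dots> = d^2 + 2*d*e + e*e" by (simp add: power2_eq_square algebra_simps)
    also have "\<dots> \<le> d^2 + 2*d*e + e*1" using e0 by (intro add_left_mono mult_left_mono) auto
    finally show ?thesis unfolding e_def by (simp add: algebra_simps)
  qed
  have pair: "(norm (s n - s k))^2 \<le> 2*(2*d+1) * (inverse (real (Suc n)) + inverse (real (Suc k)))" for n k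
  proof -
    have p: "(norm ((z - s k) - (z - s n)))^2 = 2 * (norm (z - s k))^2 + 2 * (norm (z - s n))^2 - (norm ((z - s k) + (z - s n)))^2"
      by (rule parallelogram)
    have "(z - s k) + (z - s n) = 2 *\<^sub>R (z - (1/2) *\<^sub>R (s k + s n))"
      by (simp add: algebra_simps scaleR_2)
    then have "norm ((z - s k) + (z - s n)) = 2 * norm (z - (1/2) *\<^sub>R (s k + s n))" by simp
    moreover have "d \<le> norm (z - (1/2) *\<^sub>R (s k + s n))" using dle mid s(1) by blast
    ultimately have "2 * d \<le> norm ((z - s k) + (z - s n))" by simp
    then have "(2*d)^2 \<le> (norm ((z - s k) + (z - s n)))^2" using d0 by (intro power_mono) auto
    moreover have "(z - s k) - (z - s n) = s n - s k" by simp
    ultimately show ?thesis using p sq[of n] sq[of k] by (simp add: power2_eq_square algebra_simps)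
  qed
  have "Cauchy s"
  proof (rule CauchyI)
    fix e :: real assume e: "0 < e"
    obtain N :: nat where N: "4*(2*d+1) / e^2 < real N" using reals_Archimedean2 by blast
    have "\<forall>m\<ge>N. \<forall>n\<ge>N. norm (s m - s n) < e"
    proof (intro allI impI)
      fix m n assume mn: "N \<le> m" "N \<le> n"
      have i1: "inverse (real (Suc m)) \<le> inverse (real (Suc N))" using mn by (simp add: field_simps)
      have i2: "inverse (real (Suc n)) \<le> inverse (real (Suc N))" using mn by (simp add: field_simps)
      have "(norm (s m - s n))^2 \<le> 2*(2*d+1) * (2 * inverse (real (Suc N)))"
        using pair[of m n] i1 i2 d0 by (smt (verit) mult_left_mono)
      also have "\<dots> < e^2"
      proof -
        have "4*(2*d+1) < e^2 * real (Suc N)" using N e by (simp add: field_simps) (smt (verit) zero_less_power)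
        then show ?thesis by (simp add: field_simps)
      qed
      finally show "norm (s m - s n) < e" using e by (simp add: power_less_imp_less_base less_le_not_le)
    qed
    then show "\<exists>M. \<forall>m\<ge>M. \<forall>n\<ge>M. norm (s m - s n) < e" by blast
  qed
  then obtain l where l: "s \<longlonglongrightarrow> l" using Cauchy_convergent convergent_def by blast
  have lM: "l \<in> M" using closed s(1) l by blast
  have "norm (z - l) \<le> d"
  proof (rule tendsto_le[of sequentially])
    show "(\<lambda>n. d + inverse (real (Suc n))) \<longlonglongrightarrow> d" by (rule LIMSEQ_inverse_real_of_nat_add)
    show "(\<lambda>n. norm (z - s n)) \<longlonglongrightarrow> norm (z - l)" by (intro tendsto_intros l)
    show "\<forall>\<^sub>F n in sequentially. norm (z - s n) \<le> d + inverse (real (Suc n))"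
      using s(2) less_imp_le by (intro always_eventually) blast
  qed simp
  then show ?thesis using lM dle by force
qed



lemma re_expand: "Im d = 0 \<Longrightarrow> Re (a - c*b - cnj c * cnj b + cnj c * c * d) = Re a - 2 * Re (c*b) + (cmod c)^2 * Re d"
  using cmod_power2[of c] by (simp add: power2_eq_square algebra_simps)

lemma riesz:
  fixes f :: "'h::complex_hilbert \<Rightarrow> complex"
  assumes add: "\<And>x y. f (x + y) = f x + f y" and sc: "\<And>c x. f (cscale c x) = c * f x"
   and bd: "\<And>x. cmod (f x) \<le> K * norm x"
  shows "\<exists>w. \<forall>y. f y = cinner w y"
proof (cases "\<forall>y. f y = 0")
  case True then show ?thesis by (intro exI[of _ 0]) simp
next
  case False
  then obtain z where fz: "f z \<noteq> 0" by blast
  have f0: "f 0 = 0" using add[of 0 0] by simp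
  have fdiff: "f (x - y) = f x - f y" for x y using add[of "x - y" y] by simp
  define M where "M = {y. f y = 0}"
  have "\<exists>m\<in>M. \<forall>m'\<in>M. norm (z - m) \<le> norm (z - m')"
  proof (rule closest_point)
    show "0 \<in> M" using f0 M_def by simp
    show "(1/2) *\<^sub>R (a + b) \<in> M" if "a \<in> M" "b \<in> M" for a b
      using that by (simp add: M_def scaleR_cscale sc add)
    show "l \<in> M" if "\<forall>n. s n \<in> M" "s \<longlonglongrightarrow> l" for s l
    proof -
      have "cmod (f l) \<le> K * norm (s n - l)" for n
        using bd[of "s n - l"] that(1) by (simp add: fdiff M_def)
      moreover have "(\<lambda>n. K * norm (s n - l)) \<longlonglongrightarrow> K * 0"
        using that(2) by (intro tendsto_intros) (simp add: LIM_zero_iff tendsto_norm_zero)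
      ultimately have "cmod (f l) \<le> 0"
        by (intro tendsto_le[OF _ _ tendsto_const, of sequentially]) (auto)
      then show ?thesis by (simp add: M_def)
    qed
  qed
  then obtain m where mM: "m \<in> M" and mclose: "\<And>m'. m' \<in> M \<Longrightarrow> norm (z - m) \<le> norm (z - m')" by blast
  define w0 where "w0 = z - m"
  have fw0: "f w0 = f z" using mM by (simp add: w0_def fdiff M_def)
  have orth: "cinner w0 u = 0" if "u \<in> M" for u
  proof -
    have "(cmod (cinner w0 u))^2 \<le> 0 * Re (cinner u u)"
    proof (rule quad_lemma)
      fix c
      have "m - cscale (-c) u \<in> M" using mM that by (simp add: M_def fdiff sc)
      then have "norm w0 \<le> norm (w0 + cscale (-c) u)" using mclose[of "m - cscale (-c) u"]
        by (simp add: w0_def algebra_simps)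
      then have "(norm w0)^2 \<le> (norm (w0 + cscale (-c) u))^2" by (simp add: power_mono)
      moreover have "cinner (w0 + cscale (-c) u) (w0 + cscale (-c) u) =
         cinner w0 w0 - c * cinner w0 u - cnj c * cnj (cinner w0 u) + cnj c * c * cinner u u"
        using expand_form[OF clinear_id(2), of w0 "-c" u] by (simp add: cinner_cnj[of u w0])
      then have "Re (cinner (w0 + cscale (-c) u) (w0 + cscale (-c) u)) =
         Re (cinner w0 w0) - 2 * Re (c * cinner w0 u) + (cmod c)^2 * Re (cinner u u)"
        using re_expand[OF cinner_self_Im[of u]] by metis
      ultimately show "0 \<le> 0 - 2 * Re (c * cinner w0 u) + (cmod c)^2 * Re (cinner u u)"
        using norm_sq_cinner[of w0] norm_sq_cinner[of "w0 + cscale (-c) u"] by linarith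
    qed
    then show ?thesis by simp
  qed
  have w0ne: "w0 \<noteq> 0" using fw0 fz f0 by auto
  define N where "N = cinner w0 w0"
  have N0: "N \<noteq> 0" using w0ne cinner_self_zero unfolding N_def by metis
  define w where "w = cscale (cnj (f w0 / N)) w0"
  have "f y = cinner w y" for y
  proof -
    have "cscale (f y) w0 - cscale (f w0) y \<in> M"
      by (simp add: M_def fdiff sc)
    then have "cinner w0 (cscale (f y) w0 - cscale (f w0) y) = 0" by (rule orth)
    then have "f y * N = f w0 * cinner w0 y"
      by (simp add: cinner_diff_right cinner_cscale_right N_def)
    then show ?thesis using N0 by (simp add: w_def cinner_cscale_left field_simps)
  qed
  then show ?thesis by blast
qed

definition is_adj :: "('h::complex_hilbert \<Rightarrow> 'h) \<Rightarrow> ('h \<Rightarrow> 'h) \<Rightarrow> bool" where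
  "is_adj S T \<longleftrightarrow> (\<forall>x y. cinner (S x) y = cinner x (T y))"

lemma is_adjD: "is_adj S T \<Longrightarrow> cinner (S x) y = cinner x (T y)"
  by (simp add: is_adj_def)

lemma is_adjD': "is_adj S T \<Longrightarrow> cinner y (S x) = cinner (T y) x"
  by (metis cinner_cnj is_adj_def)

lemma adj_unique: "is_adj S1 T \<Longrightarrow> is_adj S2 T \<Longrightarrow> S1 = S2"
  by (rule ext, rule cinner_ext) (simp add: is_adj_def)

lemma adj_eqI: "is_adj S T \<Longrightarrow> adj T = S"
proof -
  assume a: "is_adj S T"
  then have "\<exists>S. \<forall>x y. cinner (S x) y = cinner x (T y)" by (auto simp: is_adj_def)
  then have "\<forall>x y. cinner (adj T x) y = cinner x (T y)"
    unfolding adj_def by (rule someI_ex)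
  then have "is_adj (adj T) T" by (simp add: is_adj_def)
  then show ?thesis using a adj_unique by blast
qed

lemma is_adj_sym: "is_adj S T \<Longrightarrow> is_adj T S"
  unfolding is_adj_def by (metis cinner_cnj)

lemma is_adj_clinear: assumes "is_adj S T" "clinear T" shows "clinear S"
  unfolding clinear_def
proof (intro conjI allI)
  fix x y show "S (x + y) = S x + S y"
    by (rule cinner_ext) (simp add: is_adjD[OF assms(1)] cinner_add_left)
next
  fix c x show "S (cscale c x) = cscale c (S x)"
    by (rule cinner_ext) (simp add: is_adjD[OF assms(1)] cinner_cscale_left)
qed

lemma is_adj_bounded: assumes "is_adj S T" "bounded_op T" shows "bounded_op S"
proof -
  obtain K where K: "K > 0" "\<And>x. norm (T x) \<le> K * norm x" using bounded_opD[OF assms(2)] by blast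
  have "norm (S x) \<le> K * norm x" for x
  proof (cases "S x = 0")
    case True then show ?thesis using K by simp
  next
    case False
    have "(norm (S x))^2 = Re (cinner x (T (S x)))" by (simp add: norm_sq_cinner is_adjD[OF assms(1)])
    also have "\<dots> \<le> cmod (cinner x (T (S x)))" by (rule complex_Re_le_cmod)
    also have "\<dots> \<le> norm x * norm (T (S x))" by (rule cauchy_schwarz)
    also have "\<dots> \<le> norm x * (K * norm (S x))" using K by (simp add: mult_left_mono)
    finally have "norm (S x) * norm (S x) \<le> (K * norm x) * norm (S x)"
      by (simp add: power2_eq_square algebra_simps)
    then show ?thesis using False by simp
  qed
  then show ?thesis using is_adj_clinear assms bounded_opD(1) bounded_opI by metis
qed

lemma adj_exists: assumes "bounded_op T" shows "is_adj (adj T) T"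
proof -
  obtain K where K: "K > 0" "\<And>x. norm (T x) \<le> K * norm x" using bounded_opD[OF assms] by blast
  have cl: "clinear T" using assms bounded_opD by blast
  have "\<forall>x. \<exists>w. \<forall>y. cinner x (T y) = cinner w y"
  proof
    fix x show "\<exists>w. \<forall>y. cinner x (T y) = cinner w y"
    proof (rule riesz[where K="norm x * K"])
      show "cinner x (T (a + b)) = cinner x (T a) + cinner x (T b)" for a b
        by (simp add: clinearD[OF cl] cinner_add_right)
      show "cinner x (T (cscale c a)) = c * cinner x (T a)" for c a
        by (simp add: clinearD[OF cl] cinner_cscale_right)
      show "cmod (cinner x (T a)) \<le> norm x * K * norm a" for a
        using cauchy_schwarz[of x "T a"] K(2)[of a]
        by (metis mult.assoc mult_left_mono norm_ge_zero order_trans)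
    qed
  qed
  then obtain S where "\<forall>x y. cinner x (T y) = cinner (S x) y" by metis
  then have "is_adj S T" by (simp add: is_adj_def)
  then show ?thesis using adj_eqI by metis
qed

lemma adj_bounded: "bounded_op T \<Longrightarrow> bounded_op (adj T)"
  using adj_exists is_adj_bounded by blast

lemma adj_clinear: "bounded_op T \<Longrightarrow> clinear (adj T)"
  using adj_bounded bounded_opD(1) by blast

lemma is_adj_comp: "is_adj S T \<Longrightarrow> is_adj S' T' \<Longrightarrow> is_adj (\<lambda>x. S' (S x)) (\<lambda>y. T (T' y))"
  by (simp add: is_adj_def)

lemma is_adj_id: "is_adj (\<lambda>x. x) (\<lambda>x. x)" "is_adj id id"
  by (auto simp: is_adj_def)

lemma adj_id: "adj id = id" "adj (\<lambda>x. x) = (\<lambda>x. x)"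
  using adj_eqI is_adj_id by (metis id_def)+

lemma adj_comp: assumes "bounded_op S" "bounded_op T"
  shows "adj (S \<circ> T) = adj T \<circ> adj S"
proof -
  have "is_adj (\<lambda>x. adj T (adj S x)) (\<lambda>y. S (T y))"
    using is_adj_comp[OF adj_exists[OF assms(1)] adj_exists[OF assms(2)]] .
  then show ?thesis by (simp add: o_def adj_eqI)
qed

lemma is_adj_self_adj: "is_adj R R \<Longrightarrow> adj R = R"
  by (rule adj_eqI)

lemma is_adj_scaleR: "is_adj S T \<Longrightarrow> is_adj (\<lambda>x. r *\<^sub>R S x) (\<lambda>x. r *\<^sub>R T x)"
  by (simp add: is_adj_def cinner_scaleR_left cinner_scaleR_right)



lemma bounded_linear_cscale: "bounded_linear (cscale c :: 'a::complex_normed_vec \<Rightarrow> 'a)"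
proof (rule bounded_linear_intro[where K="cmod c"])
  show "cscale c (x + y) = cscale c x + cscale c y" for x y :: 'a by (rule cscale_add_right)
  show "cscale c (r *\<^sub>R x) = r *\<^sub>R cscale c x" for r and x :: 'a by (simp add: scaleR_cscale_comm)
  show "norm (cscale c x) \<le> norm x * cmod c" for x :: 'a by (simp add: norm_cscale)
qed

lemma bounded_linear_cinner_right: "bounded_linear (cinner x)"
proof (rule bounded_linear_intro[where K="norm x"])
  show "cinner x (a + b) = cinner x a + cinner x b" for a b by (rule cinner_add_right)
  show "cinner x (r *\<^sub>R a) = r *\<^sub>R cinner x a" for r a by (simp add: cinner_scaleR_right scaleR_conv_of_real)
  show "norm (cinner x a) \<le> norm a * norm x" for a using cauchy_schwarz[of x a] by (simp add: mult.commute)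
qed

lemma bounded_linear_cinner_left: "bounded_linear (\<lambda>v. cinner v y)"
proof (rule bounded_linear_intro[where K="norm y"])
  show "cinner (a + b) y = cinner a y + cinner b y" for a b by (rule cinner_add_left)
  show "cinner (r *\<^sub>R a) y = r *\<^sub>R cinner a y" for r a by (simp add: cinner_scaleR_left scaleR_conv_of_real)
  show "norm (cinner a y) \<le> norm a * norm y" for a using cauchy_schwarz[of a y] by simp
qed

lemma funpow_clinear: fixes Y :: "'a::complex_vec \<Rightarrow> 'a" shows "clinear Y \<Longrightarrow> clinear (Y ^^ k)"
  by (induction k) (auto simp: clinear_def)

lemma funpow_bound: fixes Y :: "'a::real_normed_vector \<Rightarrow> 'a" assumes "\<And>x. norm (Y x) \<le> s * norm x" "0 \<le> s"
  shows "norm ((Y ^^ k) x) \<le> s^k * norm x"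
proof (induction k arbitrary: x)
  case 0 then show ?case by simp
next
  case (Suc k)
  have "norm ((Y ^^ Suc k) x) = norm (Y ((Y ^^ k) x))" by simp
  also have "\<dots> \<le> s * norm ((Y ^^ k) x)" by (rule assms(1))
  also have "\<dots> \<le> s * (s^k * norm x)" using Suc assms(2) by (simp add: mult_left_mono)
  finally show ?case by (simp add: mult.assoc)
qed

lemma neumann:
  assumes cl: "clinear Y" and bd: "\<And>x. norm (Y x) \<le> s * norm x" and s: "0 \<le> s" "s < 1"
  shows "invertible_op (\<lambda>x. x - Y x)"
proof -
  have bY: "bounded_op Y" using cl bd by (rule bounded_opI)
  have blY: "bounded_linear Y" using bY bounded_op_bounded_linear by blast
  have pw: "norm ((Y ^^ k) x) \<le> s^k * norm x" for k x using funpow_bound[OF bd s(1)] .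
  have gs: "summable (\<lambda>k. s^k * norm x)" for x using s by (intro summable_mult2 summable_geometric) simp
  have summ: "summable (\<lambda>k. (Y ^^ k) x)" for x
    by (rule summable_comparison_test[OF _ gs]) (use pw in auto)
  define N where "N x = (\<Sum>k. (Y ^^ k) x)" for x
  have YN: "Y (N x) = (\<Sum>k. (Y ^^ Suc k) x)" for x
    unfolding N_def using bounded_linear.suminf[OF blY summ] by simp
  have right: "N x - Y (N x) = x" for x
    using suminf_split_head[OF summ[of x]] YN[of x] by (simp add: N_def)
  have left: "N (x - Y x) = x" for x
  proof -
    have "(Y ^^ k) (x - Y x) = (Y ^^ k) x - (Y ^^ Suc k) x" for k
      using clinear_diff[OF funpow_clinear[OF cl]] by (simp add: funpow_swap1)
    then have "N (x - Y x) = (\<Sum>k. (Y ^^ k) x - (Y ^^ Suc k) x)" by (simp add: N_def)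
    also have "\<dots> = N x - (\<Sum>k. (Y ^^ Suc k) x)"
      unfolding N_def using summ[of x] summable_Suc_iff[of "\<lambda>k. (Y ^^ k) x"] by (subst suminf_diff) auto
    also have "\<dots> = x" using right YN by metis
    finally show ?thesis .
  qed
  have clN: "clinear N" unfolding clinear_def
  proof (intro conjI allI)
    fix x y
    have "(Y ^^ k) (x + y) = (Y ^^ k) x + (Y ^^ k) y" for k using clinearD[OF funpow_clinear[OF cl]] by simp
    then show "N (x + y) = N x + N y" unfolding N_def using suminf_add[OF summ[of x] summ[of y]] by simp
  next
    fix c x
    have "(Y ^^ k) (cscale c x) = cscale c ((Y ^^ k) x)" for k using clinearD[OF funpow_clinear[OF cl]] by simp
    then show "N (cscale c x) = cscale c (N x)" unfolding N_def
      using bounded_linear.suminf[OF bounded_linear_cscale summ[of x], of c] by simp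
  qed
  have "norm (N x) \<le> (1 / (1 - s)) * norm x" for x
  proof -
    have "norm (N x) \<le> (\<Sum>k. s^k * norm x)" unfolding N_def by (rule norm_suminf_le[OF pw gs])
    also have "\<dots> = (\<Sum>k. s^k) * norm x" using suminf_mult2[of "\<lambda>k. s^k" "norm x"] s by (simp add: summable_geometric)
    also have "\<dots> = (1 / (1 - s)) * norm x" using s by (simp add: suminf_geometric)
    finally show ?thesis .
  qed
  then have bN: "bounded_op N" using clN bounded_opI by blast
  have clI: "clinear (\<lambda>x. x - Y x)" using cl by (simp add: clinear_def cscale_diff_right)
  have "norm (x - Y x) \<le> (1 + s) * norm x" for x
    using norm_triangle_ineq4[of x "Y x"] bd[of x] by (simp add: algebra_simps)
  then have "bounded_op (\<lambda>x. x - Y x)" using clI bounded_opI by blast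
  moreover have "N \<circ> (\<lambda>x. x - Y x) = id" "(\<lambda>x. x - Y x) \<circ> N = id" using left right by auto
  ultimately show ?thesis unfolding invertible_op_def using bN by blast
qed



primrec sqit :: "('h::complex_hilbert \<Rightarrow> 'h) \<Rightarrow> nat \<Rightarrow> 'h \<Rightarrow> 'h" where
  "sqit B 0 = (\<lambda>x. 0)"
| "sqit B (Suc n) = (\<lambda>x. (1/2) *\<^sub>R (B x + sqit B n (sqit B n x)))"

lemma sqit_clinear: "clinear B \<Longrightarrow> clinear (sqit B n)"
proof (induction n)
  case 0 then show ?case by (simp add: clinear_def)
next
  case (Suc n)
  then show ?case
    by (simp add: clinear_def scaleR_add_right scaleR_cscale_comm cscale_add_right)
qed

lemma sqit_comm:
  assumes "clinear B" "clinear C" "\<And>x. C (B x) = B (C x)"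
  shows "C (sqit B n x) = sqit B n (C x)"
proof (induction n arbitrary: x)
  case 0 then show ?case using clinear_0[OF assms(2)] by simp
next
  case (Suc n)
  then show ?case using assms by (simp add: clinear_scaleR clinearD)
qed

lemma sqit_comm2:
  assumes "clinear B" shows "sqit B m (sqit B n x) = sqit B n (sqit B m x)"
proof -
  have cB: "sqit B m (B x) = B (sqit B m x)" for x
  proof -
    have "B (sqit B m x) = sqit B m (B x)" by (rule sqit_comm[OF assms assms]) simp
    then show ?thesis by simp
  qed
  show ?thesis using sqit_comm[OF assms sqit_clinear[OF assms] cB, of n x] by simp
qed

lemma sqit_adj: assumes "is_adj B B" shows "is_adj (sqit B n) (sqit B n)"
proof (induction n)
  case 0 then show ?case by (simp add: is_adj_def)
next
  case (Suc n)
  then show ?case using assms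
    by (simp add: is_adj_def cinner_scaleR_left cinner_scaleR_right cinner_add_left cinner_add_right)
qed

lemma sqit_bound:
  assumes "\<And>x. norm (B x) \<le> r * norm x" "0 \<le> s" "r + s^2 \<le> 2 * s"
  shows "norm (sqit B n x) \<le> s * norm x"
proof (induction n arbitrary: x)
  case 0 then show ?case using assms by simp
next
  case (Suc n)
  have "norm (sqit B (Suc n) x) = (1/2) * norm (B x + sqit B n (sqit B n x))" by simp
  also have "\<dots> \<le> (1/2) * (norm (B x) + norm (sqit B n (sqit B n x)))"
    by (simp add: norm_triangle_ineq)
  also have "\<dots> \<le> (1/2) * (r * norm x + s * (s * norm x))"
  proof -
    have "norm (sqit B n (sqit B n x)) \<le> s * norm (sqit B n x)" by (rule Suc)
    also have "\<dots> \<le> s * (s * norm x)" using Suc assms(2) by (simp add: mult_left_mono)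
    finally show ?thesis using assms(1)[of x] by simp
  qed
  also have "\<dots> = (1/2) * (r + s^2) * norm x" by (simp add: power2_eq_square algebra_simps)
  also have "\<dots> \<le> (1/2) * (2 * s) * norm x"
    using mult_right_mono[OF assms(3) norm_ge_zero[of x]] by (simp add: algebra_simps)
  finally show ?case by simp
qed

lemma diff_step:
  assumes "clinear Y1" "clinear Y0" "Y1 (Y0 x) = Y0 (Y1 x)"
  shows "(1/2) *\<^sub>R (B x + Y1 (Y1 x)) - (1/2) *\<^sub>R (B x + Y0 (Y0 x)) =
     (1/2) *\<^sub>R (Y1 (Y1 x - Y0 x) + Y0 (Y1 x - Y0 x))"
  using assms by (simp add: clinear_diff algebra_simps)

lemma half_norm: "norm ((1/2) *\<^sub>R (a + b)) \<le> (1/2) * (norm a + norm (b::'a::real_normed_vector))"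
  by (simp add: norm_triangle_ineq)

lemma sqit_diff_bound:
  assumes cl: "clinear B" and bB: "\<And>x. norm (B x) \<le> r * norm x" and s: "0 \<le> s" "r + s^2 \<le> 2 * s" "r \<le> 2"
  shows "norm (sqit B (Suc n) x - sqit B n x) \<le> s^n * norm x"
proof (induction n arbitrary: x)
  case 0
  have "norm ((1/2) *\<^sub>R B x) \<le> (1/2) * (r * norm x)" using bB[of x] by simp
  also have "\<dots> \<le> norm x"
  proof -
    have "r * norm x \<le> 2 * norm x" using mult_right_mono[OF s(3) norm_ge_zero[of x]] .
    then show ?thesis by simp
  qed
  finally show ?case by simp
next
  case (Suc n)
  let ?Y = "sqit B" and ?D = "sqit B (Suc n) x - sqit B n x"
  have c1: "clinear (?Y (Suc n))" "clinear (?Y n)" using sqit_clinear cl by blast+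
  have e1: "sqit B (Suc (Suc n)) x = (1/2) *\<^sub>R (B x + ?Y (Suc n) (?Y (Suc n) x))"
    by (rule fun_cong[OF sqit.simps(2)])
  have e2: "sqit B (Suc n) x = (1/2) *\<^sub>R (B x + ?Y n (?Y n x))"
    by (rule fun_cong[OF sqit.simps(2)])
  have "sqit B (Suc (Suc n)) x - sqit B (Suc n) x = (1/2) *\<^sub>R (?Y (Suc n) ?D + ?Y n ?D)"
    unfolding e1 apply (subst (2) e2)
    using diff_step[OF c1 sqit_comm2[OF cl, of "Suc n" n x], of B] by simp
  then have "norm (sqit B (Suc (Suc n)) x - sqit B (Suc n) x) \<le> (1/2) * (norm (?Y (Suc n) ?D) + norm (?Y n ?D))"
    using half_norm by metis
  also have "\<dots> \<le> (1/2) * (s * norm ?D + s * norm ?D)"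
    by (intro mult_left_mono add_mono sqit_bound[OF bB s(1,2)]) auto
  also have "\<dots> = s * norm ?D" by simp
  also have "\<dots> \<le> s * (s^n * norm x)" using Suc s(1) by (intro mult_left_mono) auto
  finally show ?case by simp
qed



lemma sqrt_core:
  fixes B :: "'h::complex_hilbert \<Rightarrow> 'h"
  assumes cl: "clinear B" and sa: "is_adj B B" and bB: "\<And>x. norm (B x) \<le> r * norm x"
    and r: "0 \<le> r" "r < 1"
  shows "\<exists>R. bounded_op R \<and> is_adj R R \<and> (\<forall>x. R (R x) = x - B x)"
proof -
  define s where "s = 1 - sqrt (1 - r)"
  have s0: "0 \<le> s" using r by (simp add: s_def)
  have s1: "s < 1" using r by (simp add: s_def)
  have sq: "(sqrt (1 - r))^2 = 1 - r" using r by simp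
  have seq: "r + s^2 \<le> 2 * s" unfolding s_def using sq by (simp add: power2_eq_square algebra_simps)
  have r2: "r \<le> 2" using r by simp
  define D where "D k x = sqit B (Suc k) x - sqit B k x" for k x
  have Db: "norm (D k x) \<le> s^k * norm x" for k x
    unfolding D_def by (rule sqit_diff_bound[OF cl bB s0 seq r2])
  have gs: "summable (\<lambda>k. s^k * norm x)" for x using s0 s1 by (intro summable_mult2 summable_geometric) simp
  have summD: "summable (\<lambda>k. D k x)" for x
    by (rule summable_comparison_test[OF _ gs]) (use Db in auto)
  have tele: "sqit B n x = (\<Sum>k<n. D k x)" for n x
    by (induction n) (simp_all add: D_def del: sqit.simps(2))
  define Y where "Y x = (\<Sum>k. D k x)" for x
  have conv: "(\<lambda>n. sqit B n x) \<longlonglongrightarrow> Y x" for x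
    unfolding tele Y_def by (rule summable_LIMSEQ[OF summD])
  have clS: "clinear (sqit B n)" for n using sqit_clinear[OF cl] .
  have clY: "clinear Y" unfolding clinear_def
  proof (intro conjI allI)
    fix x y
    have "(\<lambda>n. sqit B n (x + y)) \<longlonglongrightarrow> Y x + Y y"
      using tendsto_add[OF conv[of x] conv[of y]] by (simp add: clinearD[OF clS])
    then show "Y (x + y) = Y x + Y y" using conv LIMSEQ_unique by blast
  next
    fix c x
    have "(\<lambda>n. sqit B n (cscale c x)) \<longlonglongrightarrow> cscale c (Y x)"
      using bounded_linear.tendsto[OF bounded_linear_cscale conv[of x], of c] by (simp add: clinearD[OF clS])
    then show "Y (cscale c x) = cscale c (Y x)" using conv LIMSEQ_unique by blast
  qed
  have bY: "norm (Y x) \<le> s * norm x" for x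
  proof (rule tendsto_le[of sequentially])
    show "(\<lambda>n. norm (sqit B n x)) \<longlonglongrightarrow> norm (Y x)" by (intro tendsto_intros conv)
    show "(\<lambda>n. s * norm x) \<longlonglongrightarrow> s * norm x" by simp
    show "\<forall>\<^sub>F n in sequentially. norm (sqit B n x) \<le> s * norm x"
      using sqit_bound[OF bB s0 seq] by simp
  qed simp
  have adjY: "is_adj Y Y" unfolding is_adj_def
  proof (intro allI)
    fix x y
    have "(\<lambda>n. cinner (sqit B n x) y) \<longlonglongrightarrow> cinner (Y x) y"
      by (rule bounded_linear.tendsto[OF bounded_linear_cinner_left conv])
    moreover have "(\<lambda>n. cinner x (sqit B n y)) \<longlonglongrightarrow> cinner x (Y y)"
      by (rule bounded_linear.tendsto[OF bounded_linear_cinner_right conv])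
    moreover have "cinner (sqit B n x) y = cinner x (sqit B n y)" for n
      using sqit_adj[OF sa] is_adjD by blast
    ultimately show "cinner (Y x) y = cinner x (Y y)" using LIMSEQ_unique by simp
  qed
  have Yfix: "Y x = (1/2) *\<^sub>R (B x + Y (Y x))" for x
  proof -
    have c2: "(\<lambda>n. sqit B n (sqit B n x)) \<longlonglongrightarrow> Y (Y x)"
    proof -
      define g where "g n = s * norm (sqit B n x - Y x) + norm (sqit B n (Y x) - Y (Y x))" for n
      have "(\<lambda>n. sqit B n x - Y x) \<longlonglongrightarrow> 0" using conv LIM_zero by blast
      moreover have "(\<lambda>n. sqit B n (Y x) - Y (Y x)) \<longlonglongrightarrow> 0" using conv LIM_zero by blast
      ultimately have g0: "g \<longlonglongrightarrow> 0" unfolding g_def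
        using tendsto_add[OF tendsto_mult[OF tendsto_const tendsto_norm_zero] tendsto_norm_zero] by simp
      have "norm (sqit B n (sqit B n x) - Y (Y x)) \<le> norm (g n) * 1" for n
      proof -
        have "sqit B n (sqit B n x) - Y (Y x) = sqit B n (sqit B n x - Y x) + (sqit B n (Y x) - Y (Y x))"
          by (simp add: clinear_diff[OF clS])
        then have "norm (sqit B n (sqit B n x) - Y (Y x)) \<le> norm (sqit B n (sqit B n x - Y x)) + norm (sqit B n (Y x) - Y (Y x))"
          by (metis norm_triangle_ineq)
        also have "\<dots> \<le> g n" unfolding g_def using sqit_bound[OF bB s0 seq] by simp
        also have "\<dots> \<le> norm (g n) * 1" by simp
        finally show ?thesis .
      qed
      then have "(\<lambda>n. sqit B n (sqit B n x) - Y (Y x)) \<longlonglongrightarrow> 0"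
        by (intro tendsto_0_le[OF g0, of _ 1] always_eventually) auto
      then show ?thesis by (rule LIM_zero_cancel)
    qed
    have "(\<lambda>n. sqit B (Suc n) x) \<longlonglongrightarrow> Y x" using LIMSEQ_Suc[OF conv] .
    moreover have "(\<lambda>n. sqit B (Suc n) x) \<longlonglongrightarrow> (1/2) *\<^sub>R (B x + Y (Y x))"
      using c2 by (simp del: sqit.simps(1)) (intro tendsto_intros)
    ultimately show ?thesis using LIMSEQ_unique by blast
  qed
  define R where "R x = x - Y x" for x
  have clR: "clinear R" unfolding R_def using clY by (simp add: clinear_def cscale_diff_right)
  have "norm (R x) \<le> (1 + s) * norm x" for x
    unfolding R_def using norm_triangle_ineq4[of x "Y x"] bY[of x] by (simp add: algebra_simps)
  then have bR: "bounded_op R" using clR bounded_opI by blast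
  have aR: "is_adj R R" unfolding is_adj_def R_def
    using adjY by (simp add: cinner_diff_left cinner_diff_right is_adjD)
  have "R (R x) = x - B x" for x
  proof -
    have "R (R x) = x - 2 *\<^sub>R Y x + Y (Y x)" unfolding R_def
      by (simp add: clinear_diff[OF clY] scaleR_2 algebra_simps)
    also have "2 *\<^sub>R Y x = B x + Y (Y x)" using arg_cong[OF Yfix[of x], of "scaleR 2"] by simp
    finally show ?thesis by simp
  qed
  then show ?thesis using bR aR by blast
qed



lemma pos_adj: assumes "clinear A" "\<And>x. Im (cinner x (A x)) = 0" shows "is_adj A A"
  unfolding is_adj_def using hermitian[OF assms] by (metis cinner_cnj)

lemma invertible_opD: assumes "invertible_op A"
  obtains W where "bounded_op W" "\<And>x. W (A x) = x" "\<And>x. A (W x) = x"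
  using assms unfolding invertible_op_def by (metis comp_apply id_apply)

lemma invertible_opI: "bounded_op A \<Longrightarrow> bounded_op W \<Longrightarrow> (\<And>x. W (A x) = x) \<Longrightarrow> (\<And>x. A (W x) = x) \<Longrightarrow> invertible_op A"
  unfolding invertible_op_def by (intro conjI exI[of _ W]) auto

lemma sqrt_pos:
  fixes A :: "'h::complex_hilbert \<Rightarrow> 'h"
  assumes bA: "bounded_op A" and im: "\<And>x. Im (cinner x (A x)) = 0"
    and re: "\<And>x. 0 \<le> Re (cinner x (A x))" and inv: "invertible_op A"
  shows "\<exists>R. bounded_op R \<and> is_adj R R \<and> invertible_op R \<and> (\<forall>x. R (R x) = A x)"
proof -
  have clA: "clinear A" using bA bounded_opD by blast
  obtain K where K: "K > 0" "\<And>x. norm (A x) \<le> K * norm x" using bounded_opD[OF bA] by blast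
  obtain W where W: "bounded_op W" "\<And>x. W (A x) = x" "\<And>x. A (W x) = x" using invertible_opD[OF inv] by blast
  obtain L where L: "L > 0" "\<And>x. norm (W x) \<le> L * norm x" using bounded_opD[OF W(1)] by blast
  define A' where "A' x = (1/K) *\<^sub>R A x" for x
  have clA': "clinear A'" unfolding A'_def using clA by (simp add: clinear_def scaleR_cscale_comm scaleR_add_right)
  have im': "Im (cinner x (A' x)) = 0" for x using im[of x] by (simp add: A'_def cinner_scaleR_right)
  have re': "0 \<le> Re (cinner x (A' x))" for x using re[of x] K by (simp add: A'_def cinner_scaleR_right)
  have adjA': "is_adj A' A'" using pos_adj[OF clA' im'] .
  have nA': "norm (A' v) \<le> norm v" for v using K(2)[of v] K(1) by (simp add: A'_def field_simps)
  have key1: "(norm (A' x))^2 \<le> Re (cinner x (A' x))" for x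
  proof (cases "A' x = 0")
    case True then show ?thesis using re' by simp
  next
    case False
    have e: "cinner x (A' (A' x)) = complex_of_real ((norm (A' x))^2)"
      using is_adjD[OF adjA', of x "A' x"] cinner_self_eq by metis
    have cs: "(cmod (cinner x (A' (A' x))))^2 \<le> Re (cinner x (A' x)) * Re (cinner (A' x) (A' (A' x)))"
      by (rule pos_cs[OF clA' im' re'])
    have "Re (cinner (A' x) (A' (A' x))) \<le> (norm (A' x))^2"
    proof -
      have "Re (cinner (A' x) (A' (A' x))) \<le> cmod (cinner (A' x) (A' (A' x)))" by (rule complex_Re_le_cmod)
      also have "\<dots> \<le> norm (A' x) * norm (A' (A' x))" by (rule cauchy_schwarz)
      also have "\<dots> \<le> norm (A' x) * norm (A' x)" using nA' by (simp add: mult_left_mono)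
      finally show ?thesis by (simp add: power2_eq_square)
    qed
    then have "Re (cinner x (A' x)) * Re (cinner (A' x) (A' (A' x))) \<le> Re (cinner x (A' x)) * (norm (A' x))^2"
      using re' by (simp add: mult_left_mono)
    with cs have "(cmod (cinner x (A' (A' x))))^2 \<le> Re (cinner x (A' x)) * (norm (A' x))^2" by linarith
    moreover have e2: "cmod (cinner x (A' (A' x))) = (norm (A' x))^2"
      unfolding e norm_of_real by simp
    ultimately have "((norm (A' x))^2)^2 \<le> Re (cinner x (A' x)) * (norm (A' x))^2" by simp
    then have t1: "(norm (A' x))^2 * (norm (A' x))^2 \<le> Re (cinner x (A' x)) * (norm (A' x))^2"
      by (simp only: power2_eq_square[of "(norm (A' x))^2"])
    moreover have "(norm (A' x))^2 > 0" using False by simp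
    ultimately show ?thesis by (rule mult_right_le_imp_le)
  qed
  define m where "m = min (1 / (L*K)^2) 1"
  have m: "0 < m" "m \<le> 1" using K L by (auto simp: m_def)
  have key2: "m * (norm x)^2 \<le> Re (cinner x (A' x))" for x
  proof -
    have "norm x = norm (W (A x))" using W by simp
    also have "\<dots> \<le> L * norm (A x)" by (rule L)
    also have "\<dots> = L * K * norm (A' x)" using K by (simp add: A'_def)
    finally have "(norm x)^2 \<le> (L * K * norm (A' x))^2" by (simp add: power_mono)
    also have "\<dots> = (L*K)^2 * (norm (A' x))^2" by (simp add: power_mult_distrib)
    also have "\<dots> \<le> (L*K)^2 * Re (cinner x (A' x))" using key1 by (simp add: mult_left_mono)
    finally have "(1 / (L*K)^2) * (norm x)^2 \<le> Re (cinner x (A' x))" using K L by (simp add: field_simps)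
    moreover have "m * (norm x)^2 \<le> (1 / (L*K)^2) * (norm x)^2"
      by (rule mult_right_mono) (auto simp: m_def)
    ultimately show ?thesis by linarith
  qed
  define B where "B x = x - A' x" for x
  have clB: "clinear B" unfolding B_def using clA' by (simp add: clinear_def cscale_diff_right)
  have adjB: "is_adj B B" unfolding B_def is_adj_def using adjA' by (simp add: cinner_diff_left cinner_diff_right is_adjD)
  define r where "r = sqrt (1 - m)"
  have r: "0 \<le> r" "r < 1" using m by (auto simp: r_def)
  have bB: "norm (B x) \<le> r * norm x" for x
  proof -
    have c: "cinner (A' x) x = cinner x (A' x)" using is_adjD[OF adjA'] by simp
    have "(norm (B x))^2 = (norm x)^2 - 2 * Re (cinner x (A' x)) + (norm (A' x))^2"
      unfolding B_def norm_sq_cinner by (simp add: cinner_diff_left cinner_diff_right c)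
    also have "\<dots> \<le> (norm x)^2 - Re (cinner x (A' x))" using key1[of x] by simp
    also have "\<dots> \<le> (1 - m) * (norm x)^2" using key2[of x] by (simp add: algebra_simps)
    finally have "norm (B x) \<le> sqrt ((1 - m) * (norm x)^2)" by (simp add: real_le_rsqrt)
    also have "\<dots> = r * norm x" by (simp add: r_def real_sqrt_mult)
    finally show ?thesis .
  qed
  obtain R0 where R0: "bounded_op R0" "is_adj R0 R0" "\<And>x. R0 (R0 x) = x - B x"
    using sqrt_core[OF clB adjB bB r] by blast
  have clR0: "clinear R0" using R0(1) bounded_opD by blast
  define R where "R x = sqrt K *\<^sub>R R0 x" for x
  have RR: "R (R x) = A x" for x
  proof -
    have "R (R x) = (sqrt K * sqrt K) *\<^sub>R R0 (R0 x)" unfolding R_def by (simp add: clinear_scaleR[OF clR0])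
    also have "\<dots> = K *\<^sub>R A' x" using K R0(3) by (simp add: B_def)
    also have "\<dots> = A x" using K by (simp add: A'_def)
    finally show ?thesis .
  qed
  have clR: "clinear R" unfolding R_def using clR0 by (simp add: clinear_def scaleR_cscale_comm scaleR_add_right)
  obtain K0 where K0: "K0 > 0" "\<And>x. norm (R0 x) \<le> K0 * norm x" using bounded_opD[OF R0(1)] by blast
  have "norm (R x) \<le> (sqrt K * K0) * norm x" for x
    unfolding R_def using K0(2)[of x] K by (simp add: mult.assoc mult_left_mono)
  then have bR: "bounded_op R" using clR bounded_opI by blast
  have aR: "is_adj R R" unfolding R_def using is_adj_scaleR[OF R0(2)] .
  have iR: "invertible_op R"
  proof (rule invertible_opI[OF bR bounded_op_comp[OF bR W(1)]])
    show "R (R (W x)) = x" for x using RR W by simp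
    show "R (W (R x)) = x" for x
    proof -
      have a1: "R (W (R x)) = W (A (R (W (R x))))" using W(2) by simp
      have a2: "A (R (W (R x))) = R (A (W (R x)))" using RR by metis
      have a3: "A (W (R x)) = R x" using W(3) by simp
      have "R (W (R x)) = W (R (R x))" using a1 a2 a3 by simp
      also have "\<dots> = x" using RR W(2) by simp
      finally show ?thesis .
    qed
  qed
  show ?thesis using bR aR iR RR by blast
qed



definition Qf :: "('a::cstar_algebra \<Rightarrow> 'h::complex_hilbert \<Rightarrow> 'h) \<Rightarrow> nat \<Rightarrow> (nat \<Rightarrow> nat \<Rightarrow> 'a) \<Rightarrow> (nat \<Rightarrow> 'h) \<Rightarrow> complex" where
  "Qf \<psi> n X \<xi> = (\<Sum>i<n. \<Sum>j<n. cinner (\<xi> i) (\<psi> (\<Sum>k<n. cstar (X k i) * X k j) (\<xi> j)))"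

lemma cp_map_iff: "cp_map \<psi> \<longleftrightarrow>
     (\<forall>x y. \<psi> (x + y) = (\<lambda>h. \<psi> x h + \<psi> y h)) \<and>
     (\<forall>c x. \<psi> (cscale c x) = (\<lambda>h. cscale c (\<psi> x h))) \<and>
     (\<forall>a. bounded_op (\<psi> a)) \<and>
     (\<forall>n X \<xi>. Im (Qf \<psi> n X \<xi>) = 0 \<and> 0 \<le> Re (Qf \<psi> n X \<xi>))"
  unfolding cp_map_def Qf_def Let_def by simp

lemma bounded_op_add: assumes "bounded_op S" "bounded_op T" shows "bounded_op (\<lambda>x. S x + T x)"
proof -
  obtain K where K: "\<And>x. norm (S x) \<le> K * norm x" using bounded_opD[OF assms(1)] by blast
  obtain L where L: "\<And>x. norm (T x) \<le> L * norm x" using bounded_opD[OF assms(2)] by blast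
  have b: "norm (S x + T x) \<le> (K + L) * norm x" for x
    using norm_triangle_ineq[of "S x" "T x"] K[of x] L[of x] by (simp add: algebra_simps)
  have cl: "clinear (\<lambda>x. S x + T x)" using bounded_opD(1)[OF assms(1)] bounded_opD(1)[OF assms(2)]
    unfolding clinear_def by (simp add: cscale_add_right algebra_simps)
  show ?thesis by (rule bounded_opI[OF cl b])
qed

lemma bounded_op_scaleR: assumes "bounded_op S" shows "bounded_op (\<lambda>x. t *\<^sub>R S x)"
proof -
  obtain K where K: "\<And>x. norm (S x) \<le> K * norm x" using bounded_opD[OF assms(1)] by blast
  have b: "norm (t *\<^sub>R S x) \<le> (\<bar>t\<bar> * K) * norm x" for x
    using K[of x] by (simp add: mult.assoc mult_left_mono)
  have cl: "clinear (\<lambda>x. t *\<^sub>R S x)" using bounded_opD(1)[OF assms(1)]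
    unfolding clinear_def by (simp add: scaleR_cscale_comm scaleR_add_right)
  show ?thesis by (rule bounded_opI[OF cl b])
qed

lemma bounded_op_zero: "bounded_op (\<lambda>x. 0)"
  by (rule bounded_opI[where K=0]) (auto simp: clinear_def)

lemma cp_conj:
  assumes cp: "cp_map \<psi>" and bS: "bounded_op S" and bS': "bounded_op S'" and aj: "is_adj S' S"
  shows "cp_map (\<lambda>a h. S' (\<psi> a (S h)))"
proof -
  have clS': "clinear S'" using bS' bounded_opD by blast
  note c = cp[unfolded cp_map_iff]
  show ?thesis unfolding cp_map_iff
  proof (intro conjI allI)
    fix x y show "(\<lambda>h. S' (\<psi> (x + y) (S h))) = (\<lambda>h. S' (\<psi> x (S h)) + S' (\<psi> y (S h)))"
      using c by (simp add: clinearD[OF clS'])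
  next
    fix cc x show "(\<lambda>h. S' (\<psi> (cscale cc x) (S h))) = (\<lambda>h. cscale cc (S' (\<psi> x (S h))))"
      using c by (simp add: clinearD[OF clS'])
  next
    fix a show "bounded_op (\<lambda>h. S' (\<psi> a (S h)))"
      using c bounded_op_comp[OF bS' bounded_op_comp[of "\<psi> a" S]] bS by simp
  next
    fix n X \<xi>
    have "Qf (\<lambda>a h. S' (\<psi> a (S h))) n X \<xi> = Qf \<psi> n X (\<lambda>i. S (\<xi> i))"
      unfolding Qf_def using is_adjD'[OF aj] by simp
    then show "Im (Qf (\<lambda>a h. S' (\<psi> a (S h))) n X \<xi>) = 0" "0 \<le> Re (Qf (\<lambda>a h. S' (\<psi> a (S h))) n X \<xi>)"
      using c by auto
  qed
qed

lemma cp_add: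
  assumes "cp_map \<psi>1" "cp_map \<psi>2"
  shows "cp_map (\<lambda>a h. \<psi>1 a h + \<psi>2 a h)"
proof -
  note c1 = assms(1)[unfolded cp_map_iff] and c2 = assms(2)[unfolded cp_map_iff]
  show ?thesis unfolding cp_map_iff
  proof (intro conjI allI)
    fix x y show "(\<lambda>h. \<psi>1 (x + y) h + \<psi>2 (x + y) h) = (\<lambda>h. \<psi>1 x h + \<psi>2 x h + (\<psi>1 y h + \<psi>2 y h))"
      using c1 c2 by (simp add: algebra_simps)
  next
    fix cc x show "(\<lambda>h. \<psi>1 (cscale cc x) h + \<psi>2 (cscale cc x) h) = (\<lambda>h. cscale cc (\<psi>1 x h + \<psi>2 x h))"
      using c1 c2 by (simp add: cscale_add_right)
  next
    fix a show "bounded_op (\<lambda>h. \<psi>1 a h + \<psi>2 a h)"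
      using c1 c2 bounded_op_add[of "\<psi>1 a" "\<psi>2 a"] by simp
  next
    fix n X \<xi>
    have "Qf (\<lambda>a h. \<psi>1 a h + \<psi>2 a h) n X \<xi> = Qf \<psi>1 n X \<xi> + Qf \<psi>2 n X \<xi>"
      unfolding Qf_def by (simp add: cinner_add_right sum.distrib)
    then show "Im (Qf (\<lambda>a h. \<psi>1 a h + \<psi>2 a h) n X \<xi>) = 0" "0 \<le> Re (Qf (\<lambda>a h. \<psi>1 a h + \<psi>2 a h) n X \<xi>)"
      using c1 c2 by (auto intro!: add_nonneg_nonneg)
  qed
qed

lemma cp_scaleR:
  assumes "cp_map \<psi>" "0 \<le> t"
  shows "cp_map (\<lambda>a h. t *\<^sub>R \<psi> a h)"
proof -
  note c = assms(1)[unfolded cp_map_iff]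
  show ?thesis unfolding cp_map_iff
  proof (intro conjI allI)
    fix x y show "(\<lambda>h. t *\<^sub>R \<psi> (x + y) h) = (\<lambda>h. t *\<^sub>R \<psi> x h + t *\<^sub>R \<psi> y h)"
      using c by (simp add: scaleR_add_right)
  next
    fix cc x show "(\<lambda>h. t *\<^sub>R \<psi> (cscale cc x) h) = (\<lambda>h. cscale cc (t *\<^sub>R \<psi> x h))"
      using c by (simp add: scaleR_cscale_comm)
  next
    fix a show "bounded_op (\<lambda>h. t *\<^sub>R \<psi> a h)"
      using c bounded_op_scaleR[of "\<psi> a" t] by simp
  next
    fix n X \<xi>
    have "Qf (\<lambda>a h. t *\<^sub>R \<psi> a h) n X \<xi> = complex_of_real t * Qf \<psi> n X \<xi>"
      unfolding Qf_def by (simp add: cinner_scaleR_right sum_distrib_left)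
    then show "Im (Qf (\<lambda>a h. t *\<^sub>R \<psi> a h) n X \<xi>) = 0" "0 \<le> Re (Qf (\<lambda>a h. t *\<^sub>R \<psi> a h) n X \<xi>)"
      using c assms(2) by auto
  qed
qed

lemma cp_zero: "cp_map (\<lambda>a (h::'h::complex_hilbert). (0::'h))"
  unfolding cp_map_iff Qf_def by (simp add: bounded_op_zero)

lemma cp_sum:
  assumes "finite F" "\<And>j. j \<in> F \<Longrightarrow> cp_map (f j)"
  shows "cp_map (\<lambda>a h. \<Sum>j\<in>F. f j a h)"
  using assms
proof (induction F rule: finite_induct)
  case empty then show ?case using cp_zero by simp
next
  case (insert x F)
  have "cp_map (\<lambda>a h. f x a h + (\<Sum>j\<in>F. f j a h))"
    using insert cp_add[of "f x" "\<lambda>a h. \<Sum>j\<in>F. f j a h"] by simp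
  then show ?case using insert by simp
qed

lemma cstar_one: "cstar (1::'a::cstar_algebra) = 1"
  by (metis cstar_cstar cstar_mult mult.right_neutral)

lemma cp_pos: assumes "cp_map \<psi>" shows "Im (cinner x (\<psi> 1 x)) = 0" "0 \<le> Re (cinner x (\<psi> 1 x))"
proof -
  have "Qf \<psi> 1 (\<lambda>_ _. 1) (\<lambda>_. x) = cinner x (\<psi> 1 x)" by (simp add: Qf_def cstar_one)
  then show "Im (cinner x (\<psi> 1 x)) = 0" "0 \<le> Re (cinner x (\<psi> 1 x))"
  proof -
    have "\<forall>n X \<xi>. Im (Qf \<psi> n X \<xi>) = 0 \<and> 0 \<le> Re (Qf \<psi> n X \<xi>)" using assms unfolding cp_map_iff by (elim conjE)
    then have "Im (Qf \<psi> 1 (\<lambda>_ _. 1) (\<lambda>_. x)) = 0 \<and> 0 \<le> Re (Qf \<psi> 1 (\<lambda>_ _. 1) (\<lambda>_. x))" by blast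
    then show "Im (cinner x (\<psi> 1 x)) = 0" "0 \<le> Re (cinner x (\<psi> 1 x))" using \<open>Qf \<psi> 1 (\<lambda>_ _. 1) (\<lambda>_. x) = cinner x (\<psi> 1 x)\<close> by simp_all
  qed
qed



lemma UCP_invD:
  assumes "\<phi> \<in> UCP_inv G \<tau>"
  shows "cp_map \<phi>" "\<And>g a. g \<in> carrier G \<Longrightarrow> \<phi> (\<tau> g a) = \<phi> a" "\<phi> 1 = id"
  using assms unfolding UCP_inv_def CP_inv_def by auto

lemma cp_bounded: "cp_map \<psi> \<Longrightarrow> bounded_op (\<psi> a)"
  unfolding cp_map_iff by blast

lemma invertible_op_bounded: "invertible_op A \<Longrightarrow> bounded_op A"
  unfolding invertible_op_def by blast

lemma dir21:
  fixes \<phi> :: "'a::cstar_algebra \<Rightarrow> 'h::complex_hilbert \<Rightarrow> 'h"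
  assumes phi: "\<phi> \<in> UCP_inv G \<tau>"
  and H2: "\<forall>\<psi> \<in> CP_inv G \<tau>. cp_le \<psi> \<phi> \<and> invertible_op (\<psi> 1) \<longrightarrow>
       (\<exists>Z. invertible_op Z \<and> (\<forall>a. \<psi> a = adj Z \<circ> \<phi> a \<circ> Z))"
  shows "C_extreme G \<tau> \<phi>"
  unfolding C_extreme_def
proof (intro conjI allI impI phi)
  fix n and T :: "nat \<Rightarrow> 'h \<Rightarrow> 'h" and \<Phi> :: "nat \<Rightarrow> 'a \<Rightarrow> 'h \<Rightarrow> 'h"
  assume "(\<forall>i<n. \<Phi> i \<in> UCP_inv G \<tau> \<and> invertible_op (T i)) \<and>
       (\<forall>h. (\<Sum>i<n. adj (T i) (T i h)) = h) \<and> (\<forall>a. \<phi> a = (\<lambda>h. \<Sum>i<n. adj (T i) (\<Phi> i a (T i h))))"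
  then have hP: "\<And>i. i < n \<Longrightarrow> \<Phi> i \<in> UCP_inv G \<tau> \<and> invertible_op (T i)"
    and h\<phi>: "\<And>a h. \<phi> a h = (\<Sum>i<n. adj (T i) (\<Phi> i a (T i h)))" by auto
  have \<phi>1: "\<phi> 1 = id" using UCP_invD[OF phi] by blast
  have cpj: "cp_map (\<lambda>a h. adj (T j) (\<Phi> j a (T j h)))" if "j < n" for j
  proof -
    have bT: "bounded_op (T j)" using hP[OF that] invertible_op_bounded by blast
    show ?thesis using cp_conj[OF UCP_invD(1)[of "\<Phi> j"] bT adj_bounded[OF bT] adj_exists[OF bT]] hP[OF that] by blast
  qed
  have one: "\<exists>u. unitary_op u \<and> (\<forall>a. \<Phi> i a = adj u \<circ> \<phi> a \<circ> u)" if i: "i < n" for i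
  proof -
    have \<Phi>i: "\<Phi> i \<in> UCP_inv G \<tau>" and iT: "invertible_op (T i)" using hP[OF i] by auto
    note \<Phi>D = UCP_invD[OF \<Phi>i]
    obtain W where W: "bounded_op W" "\<And>x. W (T i x) = x" "\<And>x. T i (W x) = x"
      using invertible_opD[OF iT] by blast
    have bT: "bounded_op (T i)" using iT invertible_op_bounded by blast
    have aT: "is_adj (adj (T i)) (T i)" using adj_exists[OF bT] .
    have aW: "is_adj (adj W) W" using adj_exists[OF W(1)] .
    have inv1: "adj W (adj (T i) v) = v" for v
      by (rule cinner_ext) (simp add: is_adjD[OF aW] is_adjD[OF aT] W(3))
    have inv2: "adj (T i) (adj W v) = v" for v
      by (rule cinner_ext) (simp add: is_adjD[OF aW] is_adjD[OF aT] W(2))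
    define \<psi> where "\<psi> = (\<lambda>a h. adj (T i) (\<Phi> i a (T i h)))"
    have cp\<psi>: "cp_map \<psi>" unfolding \<psi>_def using cpj[OF i] .
    have \<psi>CP: "\<psi> \<in> CP_inv G \<tau>" unfolding CP_inv_def using cp\<psi> \<Phi>D(2) by (simp add: \<psi>_def)
    have le: "cp_le \<psi> \<phi>"
    proof -
      have "(\<lambda>a h. \<phi> a h - \<psi> a h) = (\<lambda>a h. \<Sum>j\<in>{..<n} - {i}. adj (T j) (\<Phi> j a (T j h)))"
      proof (intro ext)
        fix a h
        have "\<phi> a h = \<psi> a h + (\<Sum>j\<in>{..<n} - {i}. adj (T j) (\<Phi> j a (T j h)))"
          unfolding h\<phi> \<psi>_def using i by (subst sum.remove[of "{..<n}" i]) auto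
        then show "\<phi> a h - \<psi> a h = (\<Sum>j\<in>{..<n} - {i}. adj (T j) (\<Phi> j a (T j h)))" by simp
      qed
      moreover have "cp_map (\<lambda>a h. \<Sum>j\<in>{..<n} - {i}. adj (T j) (\<Phi> j a (T j h)))"
        by (rule cp_sum[of _ "\<lambda>j a h. adj (T j) (\<Phi> j a (T j h))"]) (auto intro: cpj)
      ultimately show ?thesis unfolding cp_le_def by simp
    qed
    have \<psi>1: "\<psi> 1 = (\<lambda>h. adj (T i) (T i h))" unfolding \<psi>_def using \<Phi>D(3) by simp
    have inv\<psi>: "invertible_op (\<psi> 1)"
    proof (rule invertible_opI[OF cp_bounded[OF cp\<psi>] bounded_op_comp[OF W(1) adj_bounded[OF W(1)]]])
      show "W (adj W (\<psi> 1 x)) = x" for x unfolding \<psi>1 by (simp add: inv1 W(2))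
      show "\<psi> 1 (W (adj W x)) = x" for x unfolding \<psi>1 by (simp add: inv2 W(3))
    qed
    obtain Z where iZ: "invertible_op Z" and Zeq: "\<And>a. \<psi> a = adj Z \<circ> \<phi> a \<circ> Z"
      using H2 \<psi>CP le inv\<psi> by blast
    have bZ: "bounded_op Z" using iZ invertible_op_bounded by blast
    obtain Zi where Zi: "bounded_op Zi" "\<And>x. Zi (Z x) = x" "\<And>x. Z (Zi x) = x"
      using invertible_opD[OF iZ] by blast
    have aZ: "is_adj (adj Z) Z" using adj_exists[OF bZ] .
    define u where "u = (\<lambda>h. Z (W h))"
    have bu: "bounded_op u" unfolding u_def using bounded_op_comp[OF bZ W(1)] .
    have adju: "adj u = (\<lambda>h. adj W (adj Z h))"
      unfolding u_def by (rule adj_eqI) (rule is_adj_comp[OF aZ aW])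
    have key: "\<Phi> i a h = adj W (adj Z (\<phi> a (Z (W h))))" for a h
    proof -
      have "adj Z (\<phi> a (Z (W h))) = \<psi> a (W h)" using fun_cong[OF Zeq[of a], of "W h"] by simp
      also have "\<dots> = adj (T i) (\<Phi> i a h)" unfolding \<psi>_def by (simp add: W(3))
      finally show ?thesis by (simp add: inv1)
    qed
    have eq: "\<Phi> i a = adj u \<circ> \<phi> a \<circ> u" for a
      unfolding comp_def adju by (rule ext) (simp add: key u_def)
    have uu: "adj u (u h) = h" for h
    proof -
      have "\<Phi> i 1 h = h" using \<Phi>D(3) by simp
      then show ?thesis using key[of 1 h] \<phi>1 unfolding adju by (simp add: u_def)
    qed
    define v where "v = (\<lambda>h. T i (Zi h))"
    have uv: "u (v h) = h" for h unfolding u_def v_def by (simp add: W(2) Zi(3))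
    have uadj: "u (adj u h) = h" for h
    proof -
      have "adj u h = adj u (u (v h))" by (simp add: uv)
      also have "\<dots> = v h" by (rule uu)
      finally show ?thesis by (simp add: uv)
    qed
    have "unitary_op u" unfolding unitary_op_def using bu uu uadj by auto
    then show ?thesis using eq by blast
  qed
  then have "\<forall>i\<in>{..<n}. \<exists>u. unitary_op u \<and> (\<forall>a. \<Phi> i a = adj u \<circ> \<phi> a \<circ> u)" by blast
  then obtain U where "\<forall>i\<in>{..<n}. unitary_op (U i) \<and> (\<forall>a. \<Phi> i a = adj (U i) \<circ> \<phi> a \<circ> U i)"
    by (rule bchoice[THEN exE]) blast
  then show "\<exists>U. \<forall>i<n. unitary_op (U i) \<and> (\<forall>a. \<Phi> i a = adj (U i) \<circ> \<phi> a \<circ> U i)" by auto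
qed



lemma self_adj_inverse:
  assumes "is_adj R R" "\<And>x. V (R x) = x" "\<And>x. R (V x) = x"
  shows "is_adj V V"
  unfolding is_adj_def
proof (intro allI)
  fix x y
  have "cinner (V x) y = cinner (V x) (R (V y))" using assms(3) by simp
  also have "\<dots> = cinner (R (V x)) (V y)" using is_adjD[OF assms(1)] by simp
  also have "\<dots> = cinner x (V y)" using assms(3) by simp
  finally show "cinner (V x) y = cinner x (V y)" .
qed

lemma dir12:
  fixes \<phi> :: "'a::cstar_algebra \<Rightarrow> 'h::complex_hilbert \<Rightarrow> 'h"
  assumes CE: "C_extreme G \<tau> \<phi>" and psi: "\<psi> \<in> CP_inv G \<tau>" and le: "cp_le \<psi> \<phi>"
    and iP: "invertible_op (\<psi> 1)"
  shows "\<exists>Z. invertible_op Z \<and> (\<forall>a. \<psi> a = adj Z \<circ> \<phi> a \<circ> Z)"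
proof -
  have phi: "\<phi> \<in> UCP_inv G \<tau>" using CE unfolding C_extreme_def by blast
  note \<phi>D = UCP_invD[OF phi]
  have cp\<psi>: "cp_map \<psi>" and inv\<psi>: "\<And>g a. g \<in> carrier G \<Longrightarrow> \<psi> (\<tau> g a) = \<psi> a"
    using psi unfolding CP_inv_def by auto
  have bP: "bounded_op (\<psi> 1)" using cp_bounded[OF cp\<psi>] .
  have clP: "clinear (\<psi> 1)" using bP bounded_opD by blast
  obtain K0 where K0: "K0 > 0" "\<And>x. norm (\<psi> 1 x) \<le> K0 * norm x" using bounded_opD[OF bP] by blast
  define K where "K = max K0 1"
  have K1: "K \<ge> 1" unfolding K_def by simp
  have K2: "norm (\<psi> 1 x) \<le> K * norm x" for x
  proof -
    have "K0 * norm x \<le> K * norm x" unfolding K_def by (rule mult_right_mono) auto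
    then show ?thesis using K0(2)[of x] by linarith
  qed
  note K = K1 K2
  define t where "t = 1 / (2 * K)"
  have t: "0 < t" "t \<le> 1/2" "t * K = 1/2" using K by (auto simp: t_def field_simps)
  have posP: "Im (cinner x (\<psi> 1 x)) = 0" "0 \<le> Re (cinner x (\<psi> 1 x))" for x using cp_pos[OF cp\<psi>] by auto
  define A1 where "A1 = (\<lambda>x. t *\<^sub>R \<psi> 1 x)"
  define A2 where "A2 = (\<lambda>x. x - t *\<^sub>R \<psi> 1 x)"
  have bA1: "bounded_op A1" unfolding A1_def using bounded_op_scaleR[OF bP] .
  have clA1: "clinear A1" using bA1 bounded_opD by blast
  have iA2: "invertible_op A2" unfolding A2_def
  proof (rule neumann[OF clA1[unfolded A1_def]])
    show "norm (t *\<^sub>R \<psi> 1 x) \<le> (1/2) * norm x" for x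
    proof -
      have "norm (t *\<^sub>R \<psi> 1 x) = t * norm (\<psi> 1 x)" using t by simp
      also have "\<dots> \<le> t * (K * norm x)" using K(2) t by (simp add: mult_left_mono)
      also have "\<dots> = (1/2) * norm x" using t(3) by (simp add: mult.assoc[symmetric])
      finally show ?thesis .
    qed
  qed auto
  have bA2: "bounded_op A2" using iA2 invertible_op_bounded by blast
  obtain W where W: "bounded_op W" "\<And>x. W (\<psi> 1 x) = x" "\<And>x. \<psi> 1 (W x) = x"
    using invertible_opD[OF iP] by blast
  have clW: "clinear W" using W(1) bounded_opD by blast
  have iA1: "invertible_op A1"
  proof (rule invertible_opI[OF bA1 bounded_op_scaleR[OF W(1), of "1/t"]])
    show "(1/t) *\<^sub>R W (A1 x) = x" for x unfolding A1_def using t by (simp add: clinear_scaleR[OF clW] W(2))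
    show "A1 ((1/t) *\<^sub>R W x) = x" for x unfolding A1_def using t by (simp add: clinear_scaleR[OF clP] W(3))
  qed
  have pA1: "Im (cinner x (A1 x)) = 0" "0 \<le> Re (cinner x (A1 x))" for x
    unfolding A1_def using posP[of x] t by (auto simp: cinner_scaleR_right)
  have pA2: "Im (cinner x (A2 x)) = 0" "0 \<le> Re (cinner x (A2 x))" for x
  proof -
    show "Im (cinner x (A2 x)) = 0" unfolding A2_def using posP[of x]
      by (simp add: cinner_diff_right cinner_scaleR_right cinner_self_Im)
    have "Re (cinner x (\<psi> 1 x)) \<le> K * (norm x)^2"
    proof -
      have "Re (cinner x (\<psi> 1 x)) \<le> cmod (cinner x (\<psi> 1 x))" by (rule complex_Re_le_cmod)
      also have "\<dots> \<le> norm x * norm (\<psi> 1 x)" by (rule cauchy_schwarz)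
      also have "\<dots> \<le> norm x * (K * norm x)" using K(2) by (simp add: mult_left_mono)
      finally show ?thesis by (simp add: power2_eq_square algebra_simps)
    qed
    then have "t * Re (cinner x (\<psi> 1 x)) \<le> t * (K * (norm x)^2)" using t by (simp add: mult_left_mono)
    also have "\<dots> = (1/2) * (norm x)^2" using t(3) by (simp add: mult.assoc[symmetric])
    finally have "t * Re (cinner x (\<psi> 1 x)) \<le> (1/2) * (norm x)^2" .
    moreover have nn: "0 \<le> t * Re (cinner x (\<psi> 1 x))" using posP(2)[of x] t(1) by simp
    ultimately show "0 \<le> Re (cinner x (A2 x))" unfolding A2_def
      by (simp add: cinner_diff_right cinner_scaleR_right norm_sq_cinner[symmetric])
  qed
  obtain R1 where R1: "bounded_op R1" "is_adj R1 R1" "invertible_op R1" "\<And>x. R1 (R1 x) = A1 x"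
    using sqrt_pos[OF bA1 pA1 iA1] by blast
  obtain R2 where R2: "bounded_op R2" "is_adj R2 R2" "invertible_op R2" "\<And>x. R2 (R2 x) = A2 x"
    using sqrt_pos[OF bA2 pA2 iA2] by blast
  obtain V1 where V1: "bounded_op V1" "\<And>x. V1 (R1 x) = x" "\<And>x. R1 (V1 x) = x"
    using invertible_opD[OF R1(3)] by blast
  obtain V2 where V2: "bounded_op V2" "\<And>x. V2 (R2 x) = x" "\<And>x. R2 (V2 x) = x"
    using invertible_opD[OF R2(3)] by blast
  have aV1: "is_adj V1 V1" using self_adj_inverse[OF R1(2) V1(2,3)] .
  have aV2: "is_adj V2 V2" using self_adj_inverse[OF R2(2) V2(2,3)] .
  have adjR1: "adj R1 = R1" using adj_eqI[OF R1(2)] .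
  have adjR2: "adj R2 = R2" using adj_eqI[OF R2(2)] .
  have cp1: "cp_map (\<lambda>a h. t *\<^sub>R \<psi> a h)" using cp_scaleR[OF cp\<psi>] t by simp
  have cp2: "cp_map (\<lambda>a h. \<phi> a h - t *\<^sub>R \<psi> a h)"
  proof -
    have "(\<lambda>a h. \<phi> a h - t *\<^sub>R \<psi> a h) = (\<lambda>a h. (\<phi> a h - \<psi> a h) + (1 - t) *\<^sub>R \<psi> a h)"
      by (auto simp: algebra_simps)
    moreover have "cp_map (\<lambda>a h. (\<phi> a h - \<psi> a h) + (1 - t) *\<^sub>R \<psi> a h)"
      using cp_add[OF le[unfolded cp_le_def] cp_scaleR[OF cp\<psi>, of "1 - t"]] t by simp
    ultimately show ?thesis by simp
  qed
  define \<Phi>0 where "\<Phi>0 = (\<lambda>a h. V1 (t *\<^sub>R \<psi> a (V1 h)))"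
  define \<Phi>1 where "\<Phi>1 = (\<lambda>a h. V2 (\<phi> a (V2 h) - t *\<^sub>R \<psi> a (V2 h)))"
  have U0: "\<Phi>0 \<in> UCP_inv G \<tau>"
  proof -
    have "cp_map \<Phi>0" unfolding \<Phi>0_def using cp_conj[OF cp1 V1(1) V1(1) aV1] by simp
    moreover have "\<Phi>0 1 = id"
    proof
      fix h have "V1 (t *\<^sub>R \<psi> 1 (V1 h)) = V1 (R1 (R1 (V1 h)))" using R1(4) by (simp add: A1_def)
      then show "\<Phi>0 1 h = id h" by (simp add: \<Phi>0_def V1)
    qed
    ultimately show ?thesis unfolding UCP_inv_def CP_inv_def \<Phi>0_def using inv\<psi> by simp
  qed
  have U1: "\<Phi>1 \<in> UCP_inv G \<tau>"
  proof -
    have "cp_map \<Phi>1" unfolding \<Phi>1_def using cp_conj[OF cp2 V2(1) V2(1) aV2] by simp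
    moreover have "\<Phi>1 1 = id"
    proof
      fix h have "V2 (\<phi> 1 (V2 h) - t *\<^sub>R \<psi> 1 (V2 h)) = V2 (R2 (R2 (V2 h)))" using R2(4) \<phi>D(3) by (simp add: A2_def)
      then show "\<Phi>1 1 h = id h" by (simp add: \<Phi>1_def V2)
    qed
    ultimately show ?thesis unfolding UCP_inv_def CP_inv_def \<Phi>1_def using inv\<psi> \<phi>D(2) by simp
  qed
  define T where "T = (\<lambda>i::nat. if i = 0 then R1 else R2)"
  define \<Phi> where "\<Phi> = (\<lambda>i::nat. if i = 0 then \<Phi>0 else \<Phi>1)"
  have c1: "\<forall>i<2. \<Phi> i \<in> UCP_inv G \<tau> \<and> invertible_op (T i)"
    using U0 U1 R1(3) R2(3) by (auto simp: \<Phi>_def T_def)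
  have c2: "\<forall>h. (\<Sum>i<2. adj (T i) (T i h)) = h"
    by (simp add: numeral_2_eq_2 T_def adjR1 adjR2 R1(4) R2(4) A1_def A2_def)
  have c3: "\<forall>a. \<phi> a = (\<lambda>h. \<Sum>i<2. adj (T i) (\<Phi> i a (T i h)))"
    by (simp add: numeral_2_eq_2 T_def \<Phi>_def adjR1 adjR2 \<Phi>0_def \<Phi>1_def V1 V2)
  obtain U where U: "\<forall>i<2. unitary_op (U i) \<and> (\<forall>a. \<Phi> i a = adj (U i) \<circ> \<phi> a \<circ> U i)"
    using CE c1 c2 c3 unfolding C_extreme_def by blast
  define U0 where "U0 = U 0"
  have uU: "unitary_op U0" and eqU: "\<And>a. \<Phi>0 a = adj U0 \<circ> \<phi> a \<circ> U0"
  proof -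
    have "unitary_op (U 0) \<and> (\<forall>a. \<Phi> 0 a = adj (U 0) \<circ> \<phi> a \<circ> U 0)" using U by simp
    then show "unitary_op U0" "\<And>a. \<Phi>0 a = adj U0 \<circ> \<phi> a \<circ> U0" by (auto simp: U0_def \<Phi>_def)
  qed
  have bU: "bounded_op U0" using uU unitary_op_def by blast
  have aU: "is_adj (adj U0) U0" using adj_exists[OF bU] .
  have clU: "clinear U0" and claU: "clinear (adj U0)" using bU adj_clinear bounded_opD by blast+
  have clR1: "clinear R1" and clV1: "clinear V1" using R1(1) V1(1) bounded_opD by blast+
  have UU1: "adj U0 (U0 h) = h" for h using uU unfolding unitary_op_def by (metis comp_apply id_apply)
  have UU2: "U0 (adj U0 h) = h" for h using uU unfolding unitary_op_def by (metis comp_apply id_apply)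
  define c where "c = sqrt (2 * K)"
  have c: "c > 0" "c * c * t = 1" using K by (auto simp: c_def t_def)
  define Z where "Z = (\<lambda>h. c *\<^sub>R U0 (R1 h))"
  have bZ: "bounded_op Z" unfolding Z_def using bounded_op_scaleR[OF bounded_op_comp[OF bU R1(1)]] .
  have iZ: "invertible_op Z"
  proof (rule invertible_opI[OF bZ bounded_op_scaleR[OF bounded_op_comp[OF V1(1) adj_bounded[OF bU]], of "1/c"]])
    show "(1/c) *\<^sub>R V1 (adj U0 (Z x)) = x" for x
      unfolding Z_def using c by (simp add: clinear_scaleR[OF claU] clinear_scaleR[OF clV1] UU1 V1(2))
    show "Z ((1/c) *\<^sub>R V1 (adj U0 x)) = x" for x
      unfolding Z_def using c by (simp add: clinear_scaleR[OF clR1] clinear_scaleR[OF clU] UU2 V1(3))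
  qed
  have adjZ: "adj Z = (\<lambda>h. c *\<^sub>R R1 (adj U0 h))"
    unfolding Z_def by (rule adj_eqI) (rule is_adj_scaleR[OF is_adj_comp[OF aU R1(2)]])
  have "\<psi> a = adj Z \<circ> \<phi> a \<circ> Z" for a
  proof
    fix h
    have cl\<phi>: "clinear (\<phi> a)" using cp_bounded[OF \<phi>D(1)] bounded_opD by blast
    have "adj U0 (\<phi> a (U0 (R1 h))) = \<Phi>0 a (R1 h)" using fun_cong[OF eqU[of a], of "R1 h"] by simp
    also have "\<dots> = V1 (t *\<^sub>R \<psi> a h)" by (simp add: \<Phi>0_def V1(2))
    finally have e: "R1 (adj U0 (\<phi> a (U0 (R1 h)))) = t *\<^sub>R \<psi> a h" by (simp add: V1(3))
    have "(adj Z \<circ> \<phi> a \<circ> Z) h = c *\<^sub>R R1 (adj U0 (\<phi> a (c *\<^sub>R U0 (R1 h))))"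
      unfolding comp_def adjZ by (simp add: Z_def)
    also have "\<dots> = (c * c) *\<^sub>R R1 (adj U0 (\<phi> a (U0 (R1 h))))"
      by (simp add: clinear_scaleR[OF cl\<phi>] clinear_scaleR[OF claU] clinear_scaleR[OF clR1])
    also have "\<dots> = \<psi> a h" using e c by simp
    finally show "\<psi> a h = (adj Z \<circ> \<phi> a \<circ> Z) h" by simp
  qed
  then show ?thesis using iZ by blast
qed


theorem theorem4p4:
  fixes G :: "('g, 'b) monoid_scheme"
    and \<tau> :: "'g \<Rightarrow> 'a::cstar_algebra \<Rightarrow> 'a"
    and \<phi> :: "'a \<Rightarrow> 'h::complex_hilbert \<Rightarrow> 'h"
  assumes "group G"
    and "cstar_action G \<tau>"
    and "\<phi> \<in> UCP_inv G \<tau>"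
  shows "C_extreme G \<tau> \<phi> \<longleftrightarrow>
    (\<forall>\<psi> \<in> CP_inv G \<tau>. cp_le \<psi> \<phi> \<and> invertible_op (\<psi> 1) \<longrightarrow>
       (\<exists>Z. invertible_op Z \<and> (\<forall>a. \<psi> a = adj Z \<circ> \<phi> a \<circ> Z)))"
proof
  assume "C_extreme G \<tau> \<phi>"
  then show "\<forall>\<psi> \<in> CP_inv G \<tau>. cp_le \<psi> \<phi> \<and> invertible_op (\<psi> 1) \<longrightarrow>
       (\<exists>Z. invertible_op Z \<and> (\<forall>a. \<psi> a = adj Z \<circ> \<phi> a \<circ> Z))"
    using dir12 by blast
next
  assume "\<forall>\<psi> \<in> CP_inv G \<tau>. cp_le \<psi> \<phi> \<and> invertible_op (\<psi> 1) \<longrightarrow>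
       (\<exists>Z. invertible_op Z \<and> (\<forall>a. \<psi> a = adj Z \<circ> \<phi> a \<circ> Z))"
  then show "C_extreme G \<tau> \<phi>" using dir21 assms(3) by blast
qed

end
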